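(* Let $G=\mathbb{Z}^N$ for some $N\in\mathbb{N}$, and let $L(\cdot)$ be one of $|\cdot|_1$, $|\cdot|_2$ or $|\cdot|_2^2$ (the usual $\ell^1$-norm, $\ell^2$-norm, or squared $\ell^2$-norm on $\mathbb{Z}^N$). For $r\in(0,1)$ set $\varphi_r=r^{L}$. Then for every normalized 2-cocycle $\sigma$ on $\mathbb{Z}^N$, $\{\varphi_r\}_{r\to1^-}$ is a bounded Fourier summing net for $(G,\sigma)$; in particular $\sum_{g\in\mathbb{Z}^N}r^{L(g)}\widehat x(g)\Lambda_\sigma(g)\to x$ in operator norm as $r\to1^-$, for every $x\in C^*_r(\mathbb{Z}^N,\sigma)$.
   Context: $\sigma:G\times G\to\mathbb{T}$ is a normalized 2-cocycle ($\sigma(g,h)\sigma(gh,k)=\sigma(h,k)\sigma(g,hk)$, $\sigma(g,e)=\sigma(e,g)=1$); $\Lambda_\sigma(g)$ is the unitary on $\ell^2(G)$ with $(\Lambda_\sigma(g)\xi)(h)=\sigma(g,g^{-1}h)\xi(g^{-1}h)$; $C^*_r(G,\sigma)$ is the operator-norm closure of $\mathrm{span}\,\Lambda_\sigma(G)$; for $x\in C^*_r(G,\sigma)$, $\widehat x=x\delta_e$. For $\varphi:G\to\mathbb{C}$, $M_\varphi$ is the linear map with $M_\varphi(\Lambda_\sigma(g))=\varphi(g)\Lambda_\sigma(g)$ (extended to $C^*_r(G,\sigma)$ when bounded). $MCF(G,\sigma)$ is the set of $\varphi$ such that $\sum_g\varphi(g)\widehat x(g)\Lambda_\sigma(g)$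 converges in operator norm (as a net of finite partial sums) for all $x\in C^*_r(G,\sigma)$. A net $\{\varphi_\alpha\}$ is a Fourier summing net for $(G,\sigma)$ if each $\varphi_\alpha\in MCF(G,\sigma)$ and $M_{\varphi_\alpha}(x)\to x$ in operator norm for every $x$; it is bounded if $\sup_\alpha\|M_{\varphi_\alpha}\|<\infty$. *)

theory Defs
  imports "HOL-Analysis.Analysis"
begin

text \<open>The group Z^N is represented by the carrier set ZN N of integer sequences
  vanishing at indices >= N, with pointwise addition.\<close>

type_synonym grp = "nat \<Rightarrow> int"
type_synonym vec = "grp \<Rightarrow> complex"
type_synonym op = "vec \<Rightarrow> vec"

definition ZN :: "nat \<Rightarrow> grp set" where
  "ZN N = {g. \<forall>i\<ge>N. g i = 0}"

definition gadd :: "grp \<Rightarrow> grp \<Rightarrow> grp" where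
  "gadd g h = (\<lambda>i. g i + h i)"

definition gneg :: "grp \<Rightarrow> grp" where
  "gneg g = (\<lambda>i. - g i)"

definition gzero :: grp where
  "gzero = (\<lambda>i. 0)"

definition normalized_cocycle :: "nat \<Rightarrow> (grp \<Rightarrow> grp \<Rightarrow> complex) \<Rightarrow> bool" where
  "normalized_cocycle N \<sigma> \<longleftrightarrow>
     (\<forall>g\<in>ZN N. \<forall>h\<in>ZN N. norm (\<sigma> g h) = 1) \<and>
     (\<forall>g\<in>ZN N. \<forall>h\<in>ZN N. \<forall>k\<in>ZN N.
        \<sigma> g h * \<sigma> (gadd g h) k = \<sigma> h k * \<sigma> g (gadd h k)) \<and>
     (\<forall>g\<in>ZN N. \<sigma> g gzero = 1 \<and> \<sigma> gzero g = 1)"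

definition l2 :: "nat \<Rightarrow> vec set" where
  "l2 N = {\<xi>. (\<forall>g. g \<notin> ZN N \<longrightarrow> \<xi> g = 0) \<and> (\<lambda>g. (norm (\<xi> g))\<^sup>2) summable_on ZN N}"

definition l2norm :: "nat \<Rightarrow> vec \<Rightarrow> real" where
  "l2norm N \<xi> = sqrt (infsum (\<lambda>g. (norm (\<xi> g))\<^sup>2) (ZN N))"

definition bounded_op :: "nat \<Rightarrow> op \<Rightarrow> bool" where
  "bounded_op N T \<longleftrightarrow>
     (\<forall>\<xi>\<in>l2 N. T \<xi> \<in> l2 N) \<and>
     (\<forall>\<xi>\<in>l2 N. \<forall>\<eta>\<in>l2 N. \<forall>a::complex.
        T (\<lambda>g. a * \<xi> g + \<eta> g) = (\<lambda>g. a * T \<xi> g + T \<eta> g)) \<and>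
     (\<exists>C. \<forall>\<xi>\<in>l2 N. l2norm N (T \<xi>) \<le> C * l2norm N \<xi>)"

text \<open>Operator norm (meaningful for bounded operators).\<close>
definition opnorm :: "nat \<Rightarrow> op \<Rightarrow> real" where
  "opnorm N T = Sup {l2norm N (T \<xi>) | \<xi>. \<xi> \<in> l2 N \<and> l2norm N \<xi> \<le> 1}"

definition opdiff :: "op \<Rightarrow> op \<Rightarrow> op" where
  "opdiff S T = (\<lambda>\<xi> g. S \<xi> g - T \<xi> g)"

definition Lam :: "nat \<Rightarrow> (grp \<Rightarrow> grp \<Rightarrow> complex) \<Rightarrow> grp \<Rightarrow> op" where
  "Lam N \<sigma> g \<xi> = (\<lambda>h. if h \<in> ZN N then \<sigma> g (gadd (gneg g) h) * \<xi> (gadd (gneg g) h) else 0)"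

definition lincomb :: "nat \<Rightarrow> (grp \<Rightarrow> grp \<Rightarrow> complex) \<Rightarrow> (grp \<Rightarrow> complex) \<Rightarrow> grp set \<Rightarrow> op" where
  "lincomb N \<sigma> c F = (\<lambda>\<xi> h. \<Sum>g\<in>F. c g * Lam N \<sigma> g \<xi> h)"

definition Cstar_r :: "nat \<Rightarrow> (grp \<Rightarrow> grp \<Rightarrow> complex) \<Rightarrow> op set" where
  "Cstar_r N \<sigma> = {x. bounded_op N x \<and>
     (\<forall>\<epsilon>>0. \<exists>F c. finite F \<and> F \<subseteq> ZN N \<and> opnorm N (opdiff x (lincomb N \<sigma> c F)) < \<epsilon>)}"

definition delta_e :: vec where
  "delta_e = (\<lambda>h. if h = gzero then 1 else 0)"

definition xhat :: "op \<Rightarrow> grp \<Rightarrow> complex" where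
  "xhat x = x delta_e"

definition fourier_lim :: "nat \<Rightarrow> (grp \<Rightarrow> grp \<Rightarrow> complex) \<Rightarrow> (grp \<Rightarrow> complex) \<Rightarrow> op \<Rightarrow> op \<Rightarrow> bool" where
  "fourier_lim N \<sigma> \<phi> x y \<longleftrightarrow> bounded_op N y \<and>
     ((\<lambda>F. opnorm N (opdiff y (lincomb N \<sigma> (\<lambda>g. \<phi> g * xhat x g) F))) \<longlongrightarrow> 0)
       (finite_subsets_at_top (ZN N))"

definition MCF :: "nat \<Rightarrow> (grp \<Rightarrow> grp \<Rightarrow> complex) \<Rightarrow> (grp \<Rightarrow> complex) set" where
  "MCF N \<sigma> = {\<phi>. \<forall>x\<in>Cstar_r N \<sigma>. \<exists>y. fourier_lim N \<sigma> \<phi> x y}"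

text \<open>The multiplier M_phi on C*_r (defined when phi is in MCF).\<close>
definition Mphi :: "nat \<Rightarrow> (grp \<Rightarrow> grp \<Rightarrow> complex) \<Rightarrow> (grp \<Rightarrow> complex) \<Rightarrow> op \<Rightarrow> op" where
  "Mphi N \<sigma> \<phi> x = (SOME y. fourier_lim N \<sigma> \<phi> x y)"

definition bounded_fourier_summing_net ::
  "nat \<Rightarrow> (grp \<Rightarrow> grp \<Rightarrow> complex) \<Rightarrow> ('i \<Rightarrow> grp \<Rightarrow> complex) \<Rightarrow> 'i set \<Rightarrow> 'i filter \<Rightarrow> bool" where
  "bounded_fourier_summing_net N \<sigma> \<phi> I F \<longleftrightarrow>
     (\<forall>a\<in>I. \<phi> a \<in> MCF N \<sigma>) \<and>
     (\<forall>x\<in>Cstar_r N \<sigma>. ((\<lambda>a. opnorm N (opdiff (Mphi N \<sigma> (\<phi> a) x) x)) \<longlongrightarrow> 0) F) \<and>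
     (\<exists>C. \<forall>a\<in>I. \<forall>x\<in>Cstar_r N \<sigma>. opnorm N (Mphi N \<sigma> (\<phi> a) x) \<le> C * opnorm N x)"

definition L1 :: "nat \<Rightarrow> grp \<Rightarrow> real" where
  "L1 N g = (\<Sum>i<N. \<bar>real_of_int (g i)\<bar>)"

definition L2 :: "nat \<Rightarrow> grp \<Rightarrow> real" where
  "L2 N g = sqrt (\<Sum>i<N. (real_of_int (g i))\<^sup>2)"

definition L2sq :: "nat \<Rightarrow> grp \<Rightarrow> real" where
  "L2sq N g = (\<Sum>i<N. (real_of_int (g i))\<^sup>2)"

end

theory Submission
  imports Defs "HOL-Real_Asymp.Real_Asymp"
begin

lemma gadd_apply: "gadd g h i = g i + h i" by (simp add: gadd_def)
lemma gneg_apply: "gneg g i = - g i" by (simp add: gneg_def)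
lemma gzero_apply[simp]: "gzero i = 0" by (simp add: gzero_def)
lemma ZN_iff: "g \<in> ZN N \<longleftrightarrow> (\<forall>i\<ge>N. g i = 0)" by (simp add: ZN_def gadd_apply gneg_apply)
lemma gzero_ZN[simp]: "gzero \<in> ZN N" by (simp add: ZN_def gadd_apply gneg_apply)
lemma gadd_ZN[simp]: "g \<in> ZN N \<Longrightarrow> h \<in> ZN N \<Longrightarrow> gadd g h \<in> ZN N" by (simp add: ZN_def gadd_apply gneg_apply)
lemma gneg_ZN[simp]: "g \<in> ZN N \<Longrightarrow> gneg g \<in> ZN N" by (simp add: ZN_def gadd_apply gneg_apply)
lemma gadd_cancel1[simp]: "gadd g (gadd (gneg g) h) = h" by (rule ext) (simp add: gadd_apply gneg_apply)
lemma gadd_cancel2[simp]: "gadd (gneg g) (gadd g h) = h" by (rule ext) (simp add: gadd_apply gneg_apply)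
lemma gadd_zero[simp]: "gadd g gzero = g" "gadd gzero g = g" by (rule ext, simp add: gadd_apply gneg_apply)+
lemma gadd_negself[simp]: "gadd (gneg g) g = gzero" "gadd g (gneg g) = gzero" by (rule ext, simp add: gadd_apply gneg_apply)+
lemma gadd_commute: "gadd g h = gadd h g" by (rule ext) (simp add: gadd_apply gneg_apply)
lemma gadd_assoc: "gadd (gadd g h) k = gadd g (gadd h k)" by (rule ext) (simp add: gadd_apply gneg_apply)
lemma gneg_gneg[simp]: "gneg (gneg g) = g" by (rule ext) (simp add: gadd_apply gneg_apply)
lemma gadd_eq_iff: "gadd (gneg g) h = k \<longleftrightarrow> h = gadd g k"
  by (metis gadd_cancel1 gadd_cancel2)
lemma ZN_diff: "gadd (gneg g) h \<in> ZN N \<Longrightarrow> g \<in> ZN N \<Longrightarrow> h \<in> ZN N"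
  by (metis gadd_ZN gadd_cancel1)

lemma normalized_cocycle_norm:
  "normalized_cocycle N \<sigma> \<Longrightarrow> g \<in> ZN N \<Longrightarrow> h \<in> ZN N \<Longrightarrow> norm (\<sigma> g h) = 1"
  by (simp add: normalized_cocycle_def)
lemma normalized_cocycle_e:
  "normalized_cocycle N \<sigma> \<Longrightarrow> g \<in> ZN N \<Longrightarrow> \<sigma> g gzero = 1"
  "normalized_cocycle N \<sigma> \<Longrightarrow> g \<in> ZN N \<Longrightarrow> \<sigma> gzero g = 1"
  by (simp_all add: normalized_cocycle_def)

lemma sqrt_le_of_sq: "x \<le> y\<^sup>2 \<Longrightarrow> 0 \<le> y \<Longrightarrow> sqrt x \<le> y"
  using real_le_lsqrt real_sqrt_le_mono by (metis real_sqrt_abs abs_of_nonneg)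

lemma sq_le_of_sqrt: "sqrt x \<le> y \<Longrightarrow> 0 \<le> x \<Longrightarrow> x \<le> y\<^sup>2"
proof -
  assume a: "sqrt x \<le> y" "0 \<le> x"
  have "(sqrt x)\<^sup>2 \<le> y\<^sup>2" by (rule power_mono) (use a in auto)
  then show ?thesis using a by simp
qed

abbreviation fn :: "grp set \<Rightarrow> vec \<Rightarrow> real" where
  "fn F \<xi> \<equiv> L2_set (\<lambda>g. cmod (\<xi> g)) F"

lemma l2_zero_out: "\<xi> \<in> l2 N \<Longrightarrow> g \<notin> ZN N \<Longrightarrow> \<xi> g = 0"
  by (simp add: l2_def)

lemma l2_summable: "\<xi> \<in> l2 N \<Longrightarrow> (\<lambda>g. (cmod (\<xi> g))\<^sup>2) summable_on ZN N"
  by (simp add: l2_def)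

lemma infsum_sq_nonneg: "0 \<le> infsum (\<lambda>g. (cmod (\<xi> g))\<^sup>2) A"
  by (rule infsum_nonneg) simp

lemma l2norm_nonneg[simp]: "0 \<le> l2norm N \<xi>"
  unfolding l2norm_def using infsum_sq_nonneg by simp

lemma l2norm_sq: "\<xi> \<in> l2 N \<Longrightarrow> (l2norm N \<xi>)\<^sup>2 = infsum (\<lambda>g. (cmod (\<xi> g))\<^sup>2) (ZN N)"
  unfolding l2norm_def using infsum_sq_nonneg by simp

lemma sum_ZN_restrict:
  assumes "\<xi> \<in> l2 N" "finite F"
  shows "(\<Sum>g\<in>F. (cmod (\<xi> g))\<^sup>2) = (\<Sum>g\<in>F \<inter> ZN N. (cmod (\<xi> g))\<^sup>2)"
proof (rule sum.mono_neutral_right)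
  show "\<forall>i\<in>F - F \<inter> ZN N. (cmod (\<xi> i))\<^sup>2 = 0"
    by (simp add: l2_zero_out[OF assms(1)])
qed (use assms in blast)+

lemma l2_sum_le:
  assumes "\<xi> \<in> l2 N" "finite F"
  shows "(\<Sum>g\<in>F. (cmod (\<xi> g))\<^sup>2) \<le> (l2norm N \<xi>)\<^sup>2"
proof -
  have "(\<Sum>g\<in>F \<inter> ZN N. (cmod (\<xi> g))\<^sup>2) \<le> infsum (\<lambda>g. (cmod (\<xi> g))\<^sup>2) (ZN N)"
    using assms by (intro finite_sum_le_infsum l2_summable) auto
  then show ?thesis using assms by (simp add: sum_ZN_restrict[OF assms] l2norm_sq)
qed

lemma fn_le_l2norm:
  assumes "\<xi> \<in> l2 N" "finite F"
  shows "fn F \<xi> \<le> l2norm N \<xi>"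
  unfolding L2_set_def using l2_sum_le[OF assms] by (intro sqrt_le_of_sq) auto

lemma l2I:
  assumes "\<And>g. g \<notin> ZN N \<Longrightarrow> \<xi> g = 0"
    and "\<And>F. finite F \<Longrightarrow> F \<subseteq> ZN N \<Longrightarrow> fn F \<xi> \<le> B"
  shows "\<xi> \<in> l2 N \<and> l2norm N \<xi> \<le> B"
proof -
  have B0: "0 \<le> B" using assms(2)[of "{}"] by simp
  have S: "(\<Sum>g\<in>F. (cmod (\<xi> g))\<^sup>2) \<le> B\<^sup>2" if "finite F" "F \<subseteq> ZN N" for F
  proof -
    have "sqrt (\<Sum>g\<in>F. (cmod (\<xi> g))\<^sup>2) \<le> B" using assms(2)[OF that] by (simp add: L2_set_def)
    then show ?thesis by (rule sq_le_of_sqrt) (auto intro: sum_nonneg)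
  qed
  have sm: "(\<lambda>g. (cmod (\<xi> g))\<^sup>2) summable_on ZN N"
    by (rule nonneg_bdd_above_summable_on) (use S in \<open>auto simp: bdd_above_def\<close>)
  have "infsum (\<lambda>g. (cmod (\<xi> g))\<^sup>2) (ZN N) \<le> B\<^sup>2"
    by (rule infsum_le_finite_sums[OF sm]) (use S in auto)
  then have "l2norm N \<xi> \<le> B" unfolding l2norm_def
    using B0 by (intro sqrt_le_of_sq)
  then show ?thesis using sm assms(1) by (auto simp: l2_def)
qed

lemma l2_pt:
  assumes "\<xi> \<in> l2 N" shows "cmod (\<xi> h) \<le> l2norm N \<xi>"
proof -
  have "fn {h} \<xi> \<le> l2norm N \<xi>" by (rule fn_le_l2norm[OF assms]) auto
  then show ?thesis by (simp add: L2_set_def)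
qed

lemma l2_eq0:
  assumes "\<xi> \<in> l2 N" "l2norm N \<xi> \<le> 0" shows "\<xi> = (\<lambda>_. 0)"
proof
  fix h show "\<xi> h = 0" using l2_pt[OF assms(1), of h] assms(2) by (meson norm_le_zero_iff order_trans)
qed

lemma l2_lin:
  assumes "\<xi> \<in> l2 N" "\<eta> \<in> l2 N"
  shows "(\<lambda>g. a * \<xi> g + \<eta> g) \<in> l2 N \<and> l2norm N (\<lambda>g. a * \<xi> g + \<eta> g) \<le> cmod a * l2norm N \<xi> + l2norm N \<eta>"
proof (rule l2I)
  show "g \<notin> ZN N \<Longrightarrow> a * \<xi> g + \<eta> g = 0" for g by (simp add: l2_zero_out[OF assms(1)] l2_zero_out[OF assms(2)])
  fix F assume F: "finite F" "F \<subseteq> ZN N"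
  have "fn F (\<lambda>g. a * \<xi> g + \<eta> g) \<le> L2_set (\<lambda>g. cmod a * cmod (\<xi> g) + cmod (\<eta> g)) F"
    by (rule L2_set_mono) (auto simp: norm_triangle_le norm_mult)
  also have "\<dots> \<le> L2_set (\<lambda>g. cmod a * cmod (\<xi> g)) F + fn F \<eta>"
    by (rule L2_set_triangle_ineq)
  also have "\<dots> = cmod a * fn F \<xi> + fn F \<eta>"
    by (simp add: L2_set_right_distrib)
  also have "\<dots> \<le> cmod a * l2norm N \<xi> + l2norm N \<eta>"
    using fn_le_l2norm[OF assms(1) F(1)] fn_le_l2norm[OF assms(2) F(1)]
    by (intro add_mono mult_left_mono) auto
  finally show "fn F (\<lambda>g. a * \<xi> g + \<eta> g) \<le> cmod a * l2norm N \<xi> + l2norm N \<eta>" .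
qed

lemma l2_zero[simp]: "(\<lambda>_. 0) \<in> l2 N" "l2norm N (\<lambda>_. 0) = 0"
proof -
  have "(\<lambda>_. 0::complex) \<in> l2 N \<and> l2norm N (\<lambda>_. 0) \<le> 0" by (rule l2I) (auto simp: L2_set_def)
  then show "(\<lambda>_. 0) \<in> l2 N" "l2norm N (\<lambda>_. 0) = 0" using l2norm_nonneg by (auto intro: antisym)
qed

lemma l2_add:
  assumes "\<xi> \<in> l2 N" "\<eta> \<in> l2 N"
  shows "(\<lambda>g. \<xi> g + \<eta> g) \<in> l2 N \<and> l2norm N (\<lambda>g. \<xi> g + \<eta> g) \<le> l2norm N \<xi> + l2norm N \<eta>"
  using l2_lin[OF assms, of 1] by simp

lemma l2_scale:
  assumes "\<xi> \<in> l2 N"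
  shows "(\<lambda>g. a * \<xi> g) \<in> l2 N \<and> l2norm N (\<lambda>g. a * \<xi> g) \<le> cmod a * l2norm N \<xi>"
  using l2_lin[OF assms l2_zero(1), of a] by simp

lemma l2_diff:
  assumes "\<xi> \<in> l2 N" "\<eta> \<in> l2 N"
  shows "(\<lambda>g. \<xi> g - \<eta> g) \<in> l2 N \<and> l2norm N (\<lambda>g. \<xi> g - \<eta> g) \<le> l2norm N \<xi> + l2norm N \<eta>"
  using l2_lin[OF assms(2) assms(1), of "-1"] by simp

lemma l2_diff_sym: "l2norm N (\<lambda>g. \<xi> g - \<eta> g) = l2norm N (\<lambda>g. \<eta> g - \<xi> g)"
  unfolding l2norm_def by (simp add: norm_minus_commute)

lemma l2_limit:
  assumes lim: "\<And>h. ((\<lambda>i. v i h) \<longlongrightarrow> w h) Fl" and nt: "Fl \<noteq> bot"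
    and ev: "eventually (\<lambda>i. v i \<in> l2 N \<and> l2norm N (v i) \<le> B) Fl"
    and out: "\<And>g. g \<notin> ZN N \<Longrightarrow> w g = 0"
  shows "w \<in> l2 N \<and> l2norm N w \<le> B"
proof (rule l2I[OF out])
  fix F :: "grp set" assume F: "finite F" "F \<subseteq> ZN N"
  have "((\<lambda>i. fn F (v i)) \<longlongrightarrow> fn F w) Fl"
    unfolding L2_set_def by (intro tendsto_intros lim)
  moreover have "eventually (\<lambda>i. fn F (v i) \<le> B) Fl"
    using ev by eventually_elim (use fn_le_l2norm F in force)
  ultimately show "fn F w \<le> B" using nt by (simp add: tendsto_upperbound)
qed

definition trunc :: "grp set \<Rightarrow> vec \<Rightarrow> vec" where
  "trunc F \<xi> = (\<lambda>g. if g \<in> F then \<xi> g else 0)"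

lemma trunc_l2:
  assumes "\<xi> \<in> l2 N" shows "trunc F \<xi> \<in> l2 N \<and> l2norm N (trunc F \<xi>) \<le> l2norm N \<xi>"
proof (rule l2I)
  show "g \<notin> ZN N \<Longrightarrow> trunc F \<xi> g = 0" for g by (simp add: trunc_def l2_zero_out[OF assms(1)])
  fix H assume H: "finite H" "H \<subseteq> ZN N"
  have "fn H (trunc F \<xi>) \<le> fn H \<xi>" by (rule L2_set_mono) (auto simp: trunc_def)
  also have "\<dots> \<le> l2norm N \<xi>" by (rule fn_le_l2norm[OF assms H(1)])
  finally show "fn H (trunc F \<xi>) \<le> l2norm N \<xi>" .
qed

lemma trunc_approx:
  assumes "\<xi> \<in> l2 N" "e > 0"
  shows "\<exists>F. finite F \<and> F \<subseteq> ZN N \<and> l2norm N (\<lambda>g. \<xi> g - trunc F \<xi> g) \<le> e"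
proof -
  let ?f = "\<lambda>g. (cmod (\<xi> g))\<^sup>2"
  let ?S = "infsum ?f (ZN N)"
  have hs: "(?f has_sum ?S) (ZN N)" using l2_summable[OF assms(1)] by (rule has_sum_infsum)
  then have "((\<lambda>F. sum ?f F) \<longlongrightarrow> ?S) (finite_subsets_at_top (ZN N))"
    by (simp add: has_sum_def)
  then have "eventually (\<lambda>F. dist (sum ?f F) ?S < e\<^sup>2) (finite_subsets_at_top (ZN N))"
    using assms(2) by (intro tendstoD) auto
  then obtain F where F: "finite F" "F \<subseteq> ZN N" "dist (sum ?f F) ?S < e\<^sup>2"
    by (auto simp: eventually_finite_subsets_at_top)
  have "(\<lambda>g. \<xi> g - trunc F \<xi> g) \<in> l2 N \<and> l2norm N (\<lambda>g. \<xi> g - trunc F \<xi> g) \<le> e"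
  proof (rule l2I)
    show "g \<notin> ZN N \<Longrightarrow> \<xi> g - trunc F \<xi> g = 0" for g
      using assms by (simp add: trunc_def l2_zero_out)
    fix H assume H: "finite H" "H \<subseteq> ZN N"
    have "(\<Sum>g\<in>H. (cmod (\<xi> g - trunc F \<xi> g))\<^sup>2) = sum ?f (H - F)"
      by (rule sum.mono_neutral_cong_right) (auto simp: trunc_def H)
    also have "sum ?f (H - F) = sum ?f (H \<union> F) - sum ?f F"
    proof -
      have "sum ?f (H \<union> F) = sum ?f (H - F) + sum ?f F"
        using sum.union_disjoint[of "H - F" F ?f] H F by (simp add: Un_Diff_cancel2 Diff_disjoint Int_commute)
      then show ?thesis by simp
    qed
    also have "sum ?f (H \<union> F) \<le> ?S"
      using H F by (intro finite_sum_le_has_sum[OF hs]) auto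
    finally have "(\<Sum>g\<in>H. (cmod (\<xi> g - trunc F \<xi> g))\<^sup>2) \<le> e\<^sup>2"
      using F(3) by (simp add: dist_real_def)
    then show "fn H (\<lambda>g. \<xi> g - trunc F \<xi> g) \<le> e" unfolding L2_set_def
      using assms(2) by (intro sqrt_le_of_sq) auto
  qed
  then show ?thesis using F by blast
qed

context fixes N :: nat begin

lemma bop_l2: "bounded_op N T \<Longrightarrow> \<xi> \<in> l2 N \<Longrightarrow> T \<xi> \<in> l2 N"
  by (simp add: bounded_op_def)

lemma bop_lin: "bounded_op N T \<Longrightarrow> \<xi> \<in> l2 N \<Longrightarrow> \<eta> \<in> l2 N \<Longrightarrow>
   T (\<lambda>g. a * \<xi> g + \<eta> g) = (\<lambda>g. a * T \<xi> g + T \<eta> g)"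
  by (simp add: bounded_op_def)

lemma bop_zero: assumes "bounded_op N T" shows "T (\<lambda>_. 0) = (\<lambda>_. 0)"
proof -
  have e: "T (\<lambda>_. 0) = (\<lambda>g. T (\<lambda>_. 0) g + T (\<lambda>_. 0) g)"
    using bop_lin[OF assms l2_zero(1) l2_zero(1), of 1] by (simp only: mult_1 add_0_right)
  show ?thesis
  proof
    fix g have "T (\<lambda>_. 0) g = T (\<lambda>_. 0) g + T (\<lambda>_. 0) g" using fun_cong[OF e, of g] .
    then show "T (\<lambda>_. 0) g = 0" by simp
  qed
qed

lemma bop_scale: assumes "bounded_op N T" "\<xi> \<in> l2 N"
  shows "T (\<lambda>g. a * \<xi> g) = (\<lambda>g. a * T \<xi> g)"
  using bop_lin[OF assms l2_zero(1), of a] bop_zero[OF assms(1)] by simp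

lemma bop_add: assumes "bounded_op N T" "\<xi> \<in> l2 N" "\<eta> \<in> l2 N"
  shows "T (\<lambda>g. \<xi> g + \<eta> g) = (\<lambda>g. T \<xi> g + T \<eta> g)"
  using bop_lin[OF assms, of 1] by simp

lemma bop_diff: assumes "bounded_op N T" "\<xi> \<in> l2 N" "\<eta> \<in> l2 N"
  shows "T (\<lambda>g. \<xi> g - \<eta> g) = (\<lambda>g. T \<xi> g - T \<eta> g)"
  using bop_lin[OF assms(1) assms(3) assms(2), of "-1"] by simp

lemma opnorm_set_bdd:
  assumes "bounded_op N T"
  shows "bdd_above {l2norm N (T \<xi>) | \<xi>. \<xi> \<in> l2 N \<and> l2norm N \<xi> \<le> 1}"
proof -
  obtain C where C: "\<forall>\<xi>\<in>l2 N. l2norm N (T \<xi>) \<le> C * l2norm N \<xi>"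
    using assms by (auto simp: bounded_op_def)
  have "l2norm N (T \<xi>) \<le> max C 0" if "\<xi> \<in> l2 N" "l2norm N \<xi> \<le> 1" for \<xi>
  proof -
    have "l2norm N (T \<xi>) \<le> C * l2norm N \<xi>" using C that by auto
    also have "\<dots> \<le> max C 0 * l2norm N \<xi>" by (intro mult_right_mono) auto
    also have "\<dots> \<le> max C 0 * 1" by (intro mult_left_mono that) auto
    finally show ?thesis by simp
  qed
  then show ?thesis by (auto simp: bdd_above_def)
qed

lemma opnorm_bound:
  assumes T: "bounded_op N T" and x: "\<xi> \<in> l2 N"
  shows "l2norm N (T \<xi>) \<le> opnorm N T * l2norm N \<xi>"
proof (cases "l2norm N \<xi> = 0")
  case True
  then have "\<xi> = (\<lambda>_. 0)" using l2_eq0[OF x] by simp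
  then show ?thesis using bop_zero[OF T] by simp
next
  case False
  define n where "n = l2norm N \<xi>"
  have n: "n > 0" using False l2norm_nonneg[of N \<xi>] unfolding n_def by linarith
  define \<eta> where "\<eta> = (\<lambda>g. complex_of_real (1/n) * \<xi> g)"
  have e: "\<eta> \<in> l2 N" "l2norm N \<eta> \<le> 1"
    using l2_scale[OF x, of "complex_of_real (1/n)"] n unfolding \<eta>_def n_def[symmetric]
    by (auto simp: norm_divide)
  have "l2norm N (T \<eta>) \<le> opnorm N T"
    unfolding opnorm_def using e by (intro cSup_upper opnorm_set_bdd T) auto
  have Tx: "T \<xi> = (\<lambda>g. complex_of_real n * T \<eta> g)"
  proof -
    have "\<xi> = (\<lambda>g. complex_of_real n * \<eta> g)" using n by (auto simp: \<eta>_def)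
    then show ?thesis using bop_scale[OF T e(1)] by metis
  qed
  have "l2norm N (T \<xi>) \<le> n * l2norm N (T \<eta>)"
    using l2_scale[OF bop_l2[OF T e(1)], of "complex_of_real n"] n Tx by simp
  also have "\<dots> \<le> n * opnorm N T" using \<open>l2norm N (T \<eta>) \<le> opnorm N T\<close> n by simp
  finally show ?thesis by (simp add: n_def mult.commute)
qed

lemma opnorm_le:
  assumes "\<And>\<xi>. \<xi> \<in> l2 N \<Longrightarrow> l2norm N (T \<xi>) \<le> B * l2norm N \<xi>" "0 \<le> B"
  shows "opnorm N T \<le> B"
  unfolding opnorm_def
proof (rule cSup_least)
  show "{l2norm N (T \<xi>) |\<xi>. \<xi> \<in> l2 N \<and> l2norm N \<xi> \<le> 1} \<noteq> {}"
    using l2_zero by fastforce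
  fix x assume "x \<in> {l2norm N (T \<xi>) |\<xi>. \<xi> \<in> l2 N \<and> l2norm N \<xi> \<le> 1}"
  then obtain \<xi> where "x = l2norm N (T \<xi>)" "\<xi> \<in> l2 N" "l2norm N \<xi> \<le> 1" by blast
  then show "x \<le> B" using assms(1)[of \<xi>] mult_left_mono[of "l2norm N \<xi>" 1 B] assms(2) by auto
qed

lemma opnorm_nonneg: assumes "bounded_op N T" shows "0 \<le> opnorm N T"
proof -
  have "0 \<le> l2norm N (T (\<lambda>_. 0))" by simp
  also have "\<dots> \<le> opnorm N T"
    unfolding opnorm_def by (intro cSup_upper opnorm_set_bdd assms) (auto intro: exI[of _ "\<lambda>_. 0"])
  finally show ?thesis .
qed

lemma opnorm_cong: "(\<And>\<xi>. \<xi> \<in> l2 N \<Longrightarrow> S \<xi> = T \<xi>) \<Longrightarrow> opnorm N S = opnorm N T"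
  unfolding opnorm_def by (metis (no_types, lifting))

lemma opdiff_apply: "opdiff S T \<xi> = (\<lambda>g. S \<xi> g - T \<xi> g)"
  by (simp add: opdiff_def)

lemma bop_opdiff:
  assumes S: "bounded_op N S" and T: "bounded_op N T"
  shows "bounded_op N (opdiff S T)"
  unfolding bounded_op_def opdiff_apply
proof (intro conjI ballI allI)
  fix \<xi> assume x: "\<xi> \<in> l2 N"
  show "(\<lambda>g. S \<xi> g - T \<xi> g) \<in> l2 N" using l2_diff[OF bop_l2[OF S x] bop_l2[OF T x]] by simp
next
  fix \<xi> \<eta> a assume x: "\<xi> \<in> l2 N" "\<eta> \<in> l2 N"
  show "(\<lambda>g. S (\<lambda>g. a * \<xi> g + \<eta> g) g - T (\<lambda>g. a * \<xi> g + \<eta> g) g) =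
        (\<lambda>g. a * (S \<xi> g - T \<xi> g) + (S \<eta> g - T \<eta> g))"
    using bop_lin[OF S x] bop_lin[OF T x] by (simp add: algebra_simps)
next
  show "\<exists>C. \<forall>\<xi>\<in>l2 N. l2norm N (\<lambda>g. S \<xi> g - T \<xi> g) \<le> C * l2norm N \<xi>"
  proof (intro exI ballI)
    fix \<xi> assume x: "\<xi> \<in> l2 N"
    have "l2norm N (\<lambda>g. S \<xi> g - T \<xi> g) \<le> l2norm N (S \<xi>) + l2norm N (T \<xi>)"
      using l2_diff[OF bop_l2[OF S x] bop_l2[OF T x]] by simp
    also have "\<dots> \<le> (opnorm N S + opnorm N T) * l2norm N \<xi>"
      using opnorm_bound[OF S x] opnorm_bound[OF T x] by (simp add: algebra_simps)
    finally show "l2norm N (\<lambda>g. S \<xi> g - T \<xi> g) \<le> (opnorm N S + opnorm N T) * l2norm N \<xi>" .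
  qed
qed

lemma opnorm_opdiff_tri:
  assumes R: "bounded_op N R" and S: "bounded_op N S" and T: "bounded_op N T"
  shows "opnorm N (opdiff R T) \<le> opnorm N (opdiff R S) + opnorm N (opdiff S T)"
proof (rule opnorm_le)
  show "0 \<le> opnorm N (opdiff R S) + opnorm N (opdiff S T)"
    using opnorm_nonneg[OF bop_opdiff[OF R S]] opnorm_nonneg[OF bop_opdiff[OF S T]] by simp
  fix \<xi> assume x: "\<xi> \<in> l2 N"
  have e: "opdiff R T \<xi> = (\<lambda>g. opdiff R S \<xi> g + opdiff S T \<xi> g)" by (simp add: opdiff_apply)
  have "l2norm N (opdiff R T \<xi>) \<le> l2norm N (opdiff R S \<xi>) + l2norm N (opdiff S T \<xi>)"
    unfolding e by (intro conjunct2[OF l2_add] bop_l2[OF _ x] bop_opdiff R S T)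
  also have "\<dots> \<le> (opnorm N (opdiff R S) + opnorm N (opdiff S T)) * l2norm N \<xi>"
    using opnorm_bound[OF bop_opdiff[OF R S] x] opnorm_bound[OF bop_opdiff[OF S T] x]
    by (simp add: algebra_simps)
  finally show "l2norm N (opdiff R T \<xi>) \<le> (opnorm N (opdiff R S) + opnorm N (opdiff S T)) * l2norm N \<xi>" .
qed

lemma opnorm_opdiff_sym: "opnorm N (opdiff S T) = opnorm N (opdiff T S)"
  unfolding opnorm_def opdiff_apply using l2_diff_sym by metis

lemma opnorm_opdiff_eq0:
  assumes S: "bounded_op N S" and T: "bounded_op N T" and z: "opnorm N (opdiff S T) \<le> 0"
    and x: "\<xi> \<in> l2 N"
  shows "S \<xi> = T \<xi>"
proof -
  have "l2norm N (opdiff S T \<xi>) \<le> opnorm N (opdiff S T) * l2norm N \<xi>"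
    by (rule opnorm_bound[OF bop_opdiff[OF S T] x])
  also have "\<dots> \<le> 0" using z by (simp add: mult_nonpos_nonneg)
  finally have "opdiff S T \<xi> = (\<lambda>_. 0)" by (rule l2_eq0[OF bop_l2[OF bop_opdiff[OF S T] x]])
  then show ?thesis by (auto simp: opdiff_apply fun_eq_iff)
qed

end

definition Op :: "nat \<Rightarrow> (grp \<Rightarrow> grp \<Rightarrow> complex) \<Rightarrow> (grp \<Rightarrow> complex) \<Rightarrow> op" where
  "Op N \<sigma> c = (\<lambda>\<xi> h. infsum (\<lambda>g. c g * Lam N \<sigma> g \<xi> h) (ZN N))"

definition csum :: "nat \<Rightarrow> (grp \<Rightarrow> complex) \<Rightarrow> real \<Rightarrow> bool" where
  "csum N c B \<longleftrightarrow> (\<forall>F. finite F \<longrightarrow> F \<subseteq> ZN N \<longrightarrow> (\<Sum>g\<in>F. cmod (c g)) \<le> B)"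

context fixes N :: nat and \<sigma> :: "grp \<Rightarrow> grp \<Rightarrow> complex"
  assumes coc: "normalized_cocycle N \<sigma>"
begin

lemma Lam_out: "h \<notin> ZN N \<Longrightarrow> Lam N \<sigma> g \<xi> h = 0"
  by (simp add: Lam_def)

lemma Lam_l2:
  assumes g: "g \<in> ZN N" and x: "\<xi> \<in> l2 N"
  shows "Lam N \<sigma> g \<xi> \<in> l2 N \<and> l2norm N (Lam N \<sigma> g \<xi>) \<le> l2norm N \<xi>"
proof (rule l2I)
  show "h \<notin> ZN N \<Longrightarrow> Lam N \<sigma> g \<xi> h = 0" for h by (rule Lam_out)
  fix F assume F: "finite F" "F \<subseteq> ZN N"
  have "fn F (Lam N \<sigma> g \<xi>) = L2_set (\<lambda>h. cmod (\<xi> (gadd (gneg g) h))) F"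
  proof (rule L2_set_cong)
    fix h assume "h \<in> F"
    then have h: "h \<in> ZN N" using F by auto
    then have "norm (\<sigma> g (gadd (gneg g) h)) = 1" using g coc by (intro normalized_cocycle_norm) auto
    then show "cmod (Lam N \<sigma> g \<xi> h) = cmod (\<xi> (gadd (gneg g) h))" using h by (simp add: Lam_def norm_mult)
  qed simp
  also have "\<dots> = fn ((\<lambda>h. gadd (gneg g) h) ` F) \<xi>"
  proof -
    have "inj_on (\<lambda>h. gadd (gneg g) h) F" by (rule inj_onI) (metis gadd_cancel1)
    then show ?thesis unfolding L2_set_def by (simp add: sum.reindex)
  qed
  also have "\<dots> \<le> l2norm N \<xi>" using F by (intro fn_le_l2norm x) auto
  finally show "fn F (Lam N \<sigma> g \<xi>) \<le> l2norm N \<xi>" .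
qed

lemma Lam_lin: "Lam N \<sigma> g (\<lambda>h. a * \<xi> h + \<eta> h) = (\<lambda>h. a * Lam N \<sigma> g \<xi> h + Lam N \<sigma> g \<eta> h)"
  by (auto simp: Lam_def fun_eq_iff algebra_simps)

lemma Lam_pt: "g \<in> ZN N \<Longrightarrow> \<xi> \<in> l2 N \<Longrightarrow> cmod (Lam N \<sigma> g \<xi> h) \<le> l2norm N \<xi>"
  using Lam_l2 l2_pt by (meson order_trans)

lemma lincomb_insert: "g \<notin> F \<Longrightarrow> finite F \<Longrightarrow>
  lincomb N \<sigma> c (insert g F) \<xi> = (\<lambda>h. c g * Lam N \<sigma> g \<xi> h + lincomb N \<sigma> c F \<xi> h)"
  by (simp add: lincomb_def)

lemma lincomb_l2:
  assumes "finite F" "F \<subseteq> ZN N" "\<xi> \<in> l2 N"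
  shows "lincomb N \<sigma> c F \<xi> \<in> l2 N \<and> l2norm N (lincomb N \<sigma> c F \<xi>) \<le> (\<Sum>g\<in>F. cmod (c g)) * l2norm N \<xi>"
  using assms(1,2)
proof (induction F rule: finite_induct)
  case empty
  then show ?case by (simp add: lincomb_def)
next
  case (insert g F)
  have g: "g \<in> ZN N" and F: "F \<subseteq> ZN N" using insert by auto
  have IH: "lincomb N \<sigma> c F \<xi> \<in> l2 N" "l2norm N (lincomb N \<sigma> c F \<xi>) \<le> (\<Sum>g\<in>F. cmod (c g)) * l2norm N \<xi>"
    using insert F by auto
  have L: "Lam N \<sigma> g \<xi> \<in> l2 N" "l2norm N (Lam N \<sigma> g \<xi>) \<le> l2norm N \<xi>" using Lam_l2[OF g assms(3)] by auto
  have "l2norm N (lincomb N \<sigma> c (insert g F) \<xi>) \<le> cmod (c g) * l2norm N (Lam N \<sigma> g \<xi>) + l2norm N (lincomb N \<sigma> c F \<xi>)"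
    unfolding lincomb_insert[OF insert(2,1)] by (rule conjunct2[OF l2_lin[OF L(1) IH(1)]])
  also have "\<dots> \<le> cmod (c g) * l2norm N \<xi> + (\<Sum>g\<in>F. cmod (c g)) * l2norm N \<xi>"
    using L IH by (intro add_mono mult_left_mono) auto
  finally show ?case
    unfolding lincomb_insert[OF insert(2,1)] using l2_lin[OF L(1) IH(1)] insert
    by (simp add: algebra_simps)
qed

lemma lincomb_lin: "lincomb N \<sigma> c F (\<lambda>h. a * \<xi> h + \<eta> h) = (\<lambda>h. a * lincomb N \<sigma> c F \<xi> h + lincomb N \<sigma> c F \<eta> h)"
  unfolding lincomb_def Lam_lin by (simp add: sum.distrib sum_distrib_left algebra_simps)

lemma bop_lincomb:
  assumes "finite F" "F \<subseteq> ZN N"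
  shows "bounded_op N (lincomb N \<sigma> c F)"
  unfolding bounded_op_def using lincomb_l2[OF assms] lincomb_lin by blast

lemma bop_Lam:
  assumes "g \<in> ZN N" shows "bounded_op N (Lam N \<sigma> g)"
  unfolding bounded_op_def using Lam_l2[OF assms] Lam_lin
  by (metis mult_1)

lemma csum_summable:
  assumes "csum N c B" shows "(\<lambda>g. cmod (c g)) summable_on ZN N"
  by (rule nonneg_bdd_above_summable_on) (use assms in \<open>auto simp: csum_def bdd_above_def\<close>)

lemma csum_infsum:
  assumes "(\<lambda>g. cmod (c g)) summable_on ZN N" shows "csum N c (infsum (\<lambda>g. cmod (c g)) (ZN N))"
  unfolding csum_def using assms by (auto intro!: finite_sum_le_infsum)

lemma Op_summable:
  assumes "csum N c B" "\<xi> \<in> l2 N"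
  shows "(\<lambda>g. c g * Lam N \<sigma> g \<xi> h) summable_on ZN N"
proof -
  have "(\<lambda>g. cmod (c g) * l2norm N \<xi>) summable_on ZN N"
    using csum_summable[OF assms(1)] by (rule summable_on_cmult_left)
  moreover have "norm (c g * Lam N \<sigma> g \<xi> h) \<le> cmod (c g) * l2norm N \<xi>" if "g \<in> ZN N" for g
    using Lam_pt[OF that assms(2), of h] by (simp add: norm_mult mult_left_mono)
  ultimately have "(\<lambda>g. norm (c g * Lam N \<sigma> g \<xi> h)) summable_on ZN N"
    by (rule Infinite_Sum.abs_summable_on_comparison_test')
  then show ?thesis by (rule abs_summable_summable)
qed

lemma Op_tendsto:
  assumes "csum N c B" "\<xi> \<in> l2 N"
  shows "((\<lambda>F. lincomb N \<sigma> c F \<xi> h) \<longlongrightarrow> Op N \<sigma> c \<xi> h) (finite_subsets_at_top (ZN N))"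
  using has_sum_infsum[OF Op_summable[OF assms]] unfolding has_sum_def lincomb_def Op_def by simp

lemma Op_l2:
  assumes c: "csum N c B" and x: "\<xi> \<in> l2 N"
  shows "Op N \<sigma> c \<xi> \<in> l2 N \<and> l2norm N (Op N \<sigma> c \<xi>) \<le> B * l2norm N \<xi>"
proof (rule l2_limit[OF Op_tendsto[OF assms]])
  show "finite_subsets_at_top (ZN N) \<noteq> bot" by simp
  show "\<forall>\<^sub>F F in finite_subsets_at_top (ZN N). lincomb N \<sigma> c F \<xi> \<in> l2 N \<and> l2norm N (lincomb N \<sigma> c F \<xi>) \<le> B * l2norm N \<xi>"
  proof (rule eventually_finite_subsets_at_top_weakI)
    fix F assume F: "finite F" "F \<subseteq> ZN N"
    have "(\<Sum>g\<in>F. cmod (c g)) * l2norm N \<xi> \<le> B * l2norm N \<xi>"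
      using c F by (intro mult_right_mono) (auto simp: csum_def)
    then show "lincomb N \<sigma> c F \<xi> \<in> l2 N \<and> l2norm N (lincomb N \<sigma> c F \<xi>) \<le> B * l2norm N \<xi>"
      using lincomb_l2[OF F x, of c] by linarith
  qed
  show "h \<notin> ZN N \<Longrightarrow> Op N \<sigma> c \<xi> h = 0" for h by (simp add: Op_def Lam_out)
qed

lemma Op_lin:
  assumes c: "csum N c B" and x: "\<xi> \<in> l2 N" "\<eta> \<in> l2 N"
  shows "Op N \<sigma> c (\<lambda>h. a * \<xi> h + \<eta> h) = (\<lambda>h. a * Op N \<sigma> c \<xi> h + Op N \<sigma> c \<eta> h)"
proof
  fix h
  have "Op N \<sigma> c (\<lambda>h. a * \<xi> h + \<eta> h) h = infsum (\<lambda>g. a * (c g * Lam N \<sigma> g \<xi> h) + c g * Lam N \<sigma> g \<eta> h) (ZN N)"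
    unfolding Op_def Lam_lin by (simp add: algebra_simps)
  also have "\<dots> = infsum (\<lambda>g. a * (c g * Lam N \<sigma> g \<xi> h)) (ZN N) + infsum (\<lambda>g. c g * Lam N \<sigma> g \<eta> h) (ZN N)"
    by (intro infsum_add summable_on_cmult_right Op_summable[OF c] x)
  also have "\<dots> = a * Op N \<sigma> c \<xi> h + Op N \<sigma> c \<eta> h"
    unfolding Op_def by (subst infsum_cmult_right) (auto intro: Op_summable[OF c x(1)])
  finally show "Op N \<sigma> c (\<lambda>h. a * \<xi> h + \<eta> h) h = a * Op N \<sigma> c \<xi> h + Op N \<sigma> c \<eta> h" .
qed

lemma bop_Op:
  assumes c: "csum N c B"
  shows "bounded_op N (Op N \<sigma> c)"
  unfolding bounded_op_def using Op_l2[OF c] Op_lin[OF c] by blast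

lemma opnorm_Op:
  assumes c: "csum N c B" and B: "0 \<le> B"
  shows "opnorm N (Op N \<sigma> c) \<le> B"
  by (rule opnorm_le[OF conjunct2[OF Op_l2[OF c]] B])

lemma Op_minus_lincomb:
  assumes c: "csum N c B" and F: "finite F" "F \<subseteq> ZN N" and x: "\<xi> \<in> l2 N"
  shows "opdiff (Op N \<sigma> c) (lincomb N \<sigma> c F) \<xi> = Op N \<sigma> (\<lambda>g. if g \<in> F then 0 else c g) \<xi>"
proof
  fix h
  let ?f = "\<lambda>g. c g * Lam N \<sigma> g \<xi> h"
  have h1: "(?f has_sum Op N \<sigma> c \<xi> h) (ZN N)"
    unfolding Op_def by (rule has_sum_infsum[OF Op_summable[OF c x]])
  have h2: "((\<lambda>g. if g \<in> F then ?f g else 0) has_sum lincomb N \<sigma> c F \<xi> h) (ZN N)"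
  proof -
    have "(?f has_sum lincomb N \<sigma> c F \<xi> h) F" unfolding lincomb_def using F by simp
    then show ?thesis by (subst has_sum_cong_neutral[where T=F]) (use F in auto)
  qed
  have "((\<lambda>g. ?f g + - (if g \<in> F then ?f g else 0)) has_sum (Op N \<sigma> c \<xi> h + - lincomb N \<sigma> c F \<xi> h)) (ZN N)"
    by (intro has_sum_add h1) (simp add: has_sum_uminus h2)
  moreover have "(\<lambda>g. ?f g + - (if g \<in> F then ?f g else 0)) = (\<lambda>g. (if g \<in> F then 0 else c g) * Lam N \<sigma> g \<xi> h)"
    by (auto simp: fun_eq_iff)
  ultimately have "((\<lambda>g. (if g \<in> F then 0 else c g) * Lam N \<sigma> g \<xi> h) has_sum (Op N \<sigma> c \<xi> h - lincomb N \<sigma> c F \<xi> h)) (ZN N)"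
    by simp
  then show "opdiff (Op N \<sigma> c) (lincomb N \<sigma> c F) \<xi> h = Op N \<sigma> (\<lambda>g. if g \<in> F then 0 else c g) \<xi> h"
    unfolding opdiff_apply Op_def by (simp add: infsumI)
qed

lemma csum_tail:
  assumes s: "(\<lambda>g. cmod (c g)) summable_on ZN N" and F: "finite F" "F \<subseteq> ZN N"
  shows "csum N (\<lambda>g. if g \<in> F then 0 else c g) (infsum (\<lambda>g. cmod (c g)) (ZN N) - (\<Sum>g\<in>F. cmod (c g)))"
  unfolding csum_def
proof (intro allI impI)
  fix H assume H: "finite H" "H \<subseteq> ZN N"
  have "(\<Sum>g\<in>H. cmod (if g \<in> F then 0 else c g)) = (\<Sum>g\<in>H - F. cmod (c g))"
    by (rule sum.mono_neutral_cong_right) (auto simp: H)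
  also have "\<dots> = (\<Sum>g\<in>H \<union> F. cmod (c g)) - (\<Sum>g\<in>F. cmod (c g))"
  proof -
    have "(\<Sum>g\<in>H \<union> F. cmod (c g)) = (\<Sum>g\<in>H - F. cmod (c g)) + (\<Sum>g\<in>F. cmod (c g))"
      using sum.union_disjoint[of "H - F" F "\<lambda>g. cmod (c g)"] H F by (simp add: Un_Diff_cancel2 Diff_disjoint Int_commute)
    then show ?thesis by simp
  qed
  also have "(\<Sum>g\<in>H \<union> F. cmod (c g)) \<le> infsum (\<lambda>g. cmod (c g)) (ZN N)"
    using H F by (intro finite_sum_le_infsum s) auto
  finally show "(\<Sum>g\<in>H. cmod (if g \<in> F then 0 else c g)) \<le> infsum (\<lambda>g. cmod (c g)) (ZN N) - (\<Sum>g\<in>F. cmod (c g))"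
    by simp
qed

lemma Op_fourier:
  assumes s: "(\<lambda>g. cmod (c g)) summable_on ZN N"
  shows "((\<lambda>F. opnorm N (opdiff (Op N \<sigma> c) (lincomb N \<sigma> c F))) \<longlongrightarrow> 0) (finite_subsets_at_top (ZN N))"
proof -
  let ?S = "infsum (\<lambda>g. cmod (c g)) (ZN N)"
  have c: "csum N c ?S" by (rule csum_infsum[OF s])
  have lim: "((\<lambda>F. ?S - (\<Sum>g\<in>F. cmod (c g))) \<longlongrightarrow> 0) (finite_subsets_at_top (ZN N))"
  proof -
    have "((\<lambda>F. (\<Sum>g\<in>F. cmod (c g))) \<longlongrightarrow> ?S) (finite_subsets_at_top (ZN N))"
      using has_sum_infsum[OF s] by (simp add: has_sum_def)
    then have "((\<lambda>F. ?S - (\<Sum>g\<in>F. cmod (c g))) \<longlongrightarrow> ?S - ?S) (finite_subsets_at_top (ZN N))"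
      by (intro tendsto_intros)
    then show ?thesis by simp
  qed
  show ?thesis
  proof (rule tendsto_sandwich[OF _ _ tendsto_const lim])
    show "\<forall>\<^sub>F F in finite_subsets_at_top (ZN N). 0 \<le> opnorm N (opdiff (Op N \<sigma> c) (lincomb N \<sigma> c F))"
      by (intro eventually_finite_subsets_at_top_weakI opnorm_nonneg bop_opdiff bop_Op[OF c] bop_lincomb)
    show "\<forall>\<^sub>F F in finite_subsets_at_top (ZN N). opnorm N (opdiff (Op N \<sigma> c) (lincomb N \<sigma> c F)) \<le> ?S - (\<Sum>g\<in>F. cmod (c g))"
    proof (rule eventually_finite_subsets_at_top_weakI)
      fix F assume F: "finite F" "F \<subseteq> ZN N"
      have ct: "csum N (\<lambda>g. if g \<in> F then 0 else c g) (?S - (\<Sum>g\<in>F. cmod (c g)))"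
        by (rule csum_tail[OF s F])
      have "opnorm N (opdiff (Op N \<sigma> c) (lincomb N \<sigma> c F)) = opnorm N (Op N \<sigma> (\<lambda>g. if g \<in> F then 0 else c g))"
        by (rule opnorm_cong) (rule Op_minus_lincomb[OF c F])
      also have "\<dots> \<le> ?S - (\<Sum>g\<in>F. cmod (c g))"
      proof (rule opnorm_Op[OF ct])
        show "0 \<le> ?S - (\<Sum>g\<in>F. cmod (c g))"
          using F by (simp add: finite_sum_le_infsum s)
      qed
      finally show "opnorm N (opdiff (Op N \<sigma> c) (lincomb N \<sigma> c F)) \<le> ?S - (\<Sum>g\<in>F. cmod (c g))" .
    qed
  qed
qed

lemma Op_fourier_lim:
  assumes s: "(\<lambda>g. cmod (\<phi> g * xhat x g)) summable_on ZN N"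
  shows "fourier_lim N \<sigma> \<phi> x (Op N \<sigma> (\<lambda>g. \<phi> g * xhat x g))"
  unfolding fourier_lim_def
  using bop_Op[OF csum_infsum[OF s]] Op_fourier[OF s] by blast

end

section \<open>Schur-bounded kernels\<close>

definition bf :: "(grp \<Rightarrow> grp \<Rightarrow> complex) \<Rightarrow> grp set \<Rightarrow> grp set \<Rightarrow> vec \<Rightarrow> vec \<Rightarrow> complex" where
  "bf X H K \<zeta> \<eta> = (\<Sum>h\<in>H. \<Sum>k\<in>K. X h k * \<zeta> k * cnj (\<eta> h))"

definition Bnd :: "nat \<Rightarrow> (grp \<Rightarrow> grp \<Rightarrow> complex) \<Rightarrow> real \<Rightarrow> bool" where
  "Bnd N X C \<longleftrightarrow> (\<forall>H K \<zeta> \<eta>. finite H \<longrightarrow> finite K \<longrightarrow> H \<subseteq> ZN N \<longrightarrow> K \<subseteq> ZN N \<longrightarrow>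
      cmod (bf X H K \<zeta> \<eta>) \<le> C * fn K \<zeta> * fn H \<eta>)"

abbreviation Km :: "(grp \<Rightarrow> grp \<Rightarrow> real) \<Rightarrow> (grp \<Rightarrow> grp \<Rightarrow> complex) \<Rightarrow> (grp \<Rightarrow> grp \<Rightarrow> complex)" where
  "Km \<kappa> X \<equiv> (\<lambda>h k. of_real (\<kappa> h k) * X h k)"

definition SB :: "nat \<Rightarrow> (grp \<Rightarrow> grp \<Rightarrow> real) \<Rightarrow> real \<Rightarrow> bool" where
  "SB N \<kappa> M \<longleftrightarrow> (\<forall>X C. 0 \<le> C \<longrightarrow> Bnd N X C \<longrightarrow> Bnd N (Km \<kappa> X) (M * C))"

lemma BndD: "Bnd N X C \<Longrightarrow> finite H \<Longrightarrow> finite K \<Longrightarrow> H \<subseteq> ZN N \<Longrightarrow> K \<subseteq> ZN N \<Longrightarrow>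
      cmod (bf X H K \<zeta> \<eta>) \<le> C * fn K \<zeta> * fn H \<eta>"
  by (simp add: Bnd_def)

lemma SBD: "SB N \<kappa> M \<Longrightarrow> 0 \<le> C \<Longrightarrow> Bnd N X C \<Longrightarrow> Bnd N (Km \<kappa> X) (M * C)"
  by (simp add: SB_def)

lemma SB_mult:
  assumes "SB N \<kappa>1 M1" "SB N \<kappa>2 M2" "0 \<le> M2"
  shows "SB N (\<lambda>h k. \<kappa>1 h k * \<kappa>2 h k) (M1 * M2)"
  unfolding SB_def
proof (intro allI impI)
  fix X C assume C: "0 \<le> C" and X: "Bnd N X C"
  have b2: "Bnd N (Km \<kappa>2 X) (M2 * C)" by (rule SBD[OF assms(2) C X])
  have nn: "0 \<le> M2 * C" using C assms(3) by simp
  have b: "Bnd N (Km \<kappa>1 (Km \<kappa>2 X)) (M1 * (M2 * C))"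
    by (rule SBD[OF assms(1) nn b2])
  have eq: "Km \<kappa>1 (Km \<kappa>2 X) = Km (\<lambda>h k. \<kappa>1 h k * \<kappa>2 h k) X"
    by (rule ext, rule ext) (simp only: of_real_mult mult.assoc)
  have "Bnd N (Km (\<lambda>h k. \<kappa>1 h k * \<kappa>2 h k) X) (M1 * (M2 * C))"
    using b unfolding eq .
  then show "Bnd N (Km (\<lambda>h k. \<kappa>1 h k * \<kappa>2 h k) X) (M1 * M2 * C)"
    by (simp only: mult.assoc)
qed

lemma SB_const: "SB N (\<lambda>h k. a) \<bar>a\<bar>"
  unfolding SB_def Bnd_def
proof (intro allI impI)
  fix X C H K \<zeta> \<eta>
  assume C: "0 \<le> C" and X: "\<forall>H K \<zeta> \<eta>. finite H \<longrightarrow> finite K \<longrightarrow> H \<subseteq> ZN N \<longrightarrow> K \<subseteq> ZN N \<longrightarrow>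
      cmod (bf X H K \<zeta> \<eta>) \<le> C * fn K \<zeta> * fn H \<eta>"
    and HK: "finite H" "finite K" "H \<subseteq> ZN N" "K \<subseteq> ZN N"
  have "bf (Km (\<lambda>h k. a) X) H K \<zeta> \<eta> = of_real a * bf X H K \<zeta> \<eta>"
    unfolding bf_def by (simp add: sum_distrib_left mult.assoc)
  then have "cmod (bf (Km (\<lambda>h k. a) X) H K \<zeta> \<eta>) = \<bar>a\<bar> * cmod (bf X H K \<zeta> \<eta>)"
    by (simp add: norm_mult)
  also have "\<dots> \<le> \<bar>a\<bar> * (C * fn K \<zeta> * fn H \<eta>)"
    using X HK by (intro mult_left_mono) auto
  finally show "cmod (bf (Km (\<lambda>h k. a) X) H K \<zeta> \<eta>) \<le> \<bar>a\<bar> * C * fn K \<zeta> * fn H \<eta>"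
    by (simp add: mult.assoc)
qed

lemma SB_scale:
  assumes "SB N \<kappa> M" "0 \<le> a" "0 \<le> M"
  shows "SB N (\<lambda>h k. a * \<kappa> h k) (a * M)"
  using SB_mult[OF SB_const[of N a] assms(1) assms(3)] assms(2) by simp

lemma SB_power:
  assumes "SB N \<kappa> M" "0 \<le> M"
  shows "SB N (\<lambda>h k. (\<kappa> h k) ^ n) (M ^ n)"
proof (induction n)
  case 0
  then show ?case using SB_const[of N 1] by simp
next
  case (Suc n)
  then show ?case using SB_mult[OF assms(1) Suc assms(2)[THEN zero_le_power]] by (simp add: mult_ac)
qed

lemma SB_prod:
  assumes "finite I" "\<And>i. i \<in> I \<Longrightarrow> SB N (\<kappa> i) 1"
  shows "SB N (\<lambda>h k. \<Prod>i\<in>I. \<kappa> i h k) 1"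
  using assms
proof (induction I rule: finite_induct)
  case empty
  then show ?case using SB_const[of N 1] by simp
next
  case (insert j I)
  have "SB N (\<lambda>h k. \<kappa> j h k * (\<Prod>i\<in>I. \<kappa> i h k)) (1 * 1)"
    using insert by (intro SB_mult) auto
  then show ?case using insert by simp
qed

lemma bf_sums:
  assumes "\<And>h k. (\<lambda>n. f n h k) sums f' h k"
  shows "(\<lambda>n. bf (Km (f n) X) H K \<zeta> \<eta>) sums bf (Km f' X) H K \<zeta> \<eta>"
  unfolding bf_def
proof (intro sums_sum)
  fix h k
  show "(\<lambda>n. complex_of_real (f n h k) * X h k * \<zeta> k * cnj (\<eta> h)) sums (complex_of_real (f' h k) * X h k * \<zeta> k * cnj (\<eta> h))"
    by (intro sums_mult2 sums_of_real assms)
qed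

lemma SB_series:
  assumes k: "\<And>h k. (\<lambda>n. \<kappa> n h k) sums \<kappa>' h k"
    and sb: "\<And>n. SB N (\<kappa> n) (M n)" and M: "\<And>n. 0 \<le> M n" "M sums M'"
  shows "SB N \<kappa>' M'"
  unfolding SB_def
proof (intro allI impI)
  fix X C
  assume C: "0 \<le> C" and X: "Bnd N X C"
  show "Bnd N (Km \<kappa>' X) (M' * C)" unfolding Bnd_def
  proof (intro allI impI)
  fix H K \<zeta> \<eta>
  assume HK: "finite H" "finite K" "H \<subseteq> ZN N" "K \<subseteq> ZN N"
  define s where "s n = bf (Km (\<kappa> n) X) H K \<zeta> \<eta>" for n
  define W where "W = C * fn K \<zeta> * fn H \<eta>"
  have W: "0 \<le> W" using C by (simp add: W_def)
  have ss: "s sums bf (Km \<kappa>' X) H K \<zeta> \<eta>" unfolding s_def by (rule bf_sums[OF k])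
  have bnd: "norm (s n) \<le> M n * W" for n
    using BndD[OF SBD[OF sb C X] HK] by (simp add: s_def W_def mult.assoc)
  have sM: "summable (\<lambda>n. M n * W)" using M(2) by (intro summable_mult2 sums_summable) auto
  have sn: "summable (\<lambda>n. norm (s n))"
    by (rule summable_comparison_test'[OF sM]) (use bnd in simp)
  have "cmod (bf (Km \<kappa>' X) H K \<zeta> \<eta>) = norm (suminf s)" using sums_unique[OF ss] by simp
  also have "\<dots> \<le> (\<Sum>n. norm (s n))" by (rule summable_norm[OF sn])
  also have "\<dots> \<le> (\<Sum>n. M n * W)" by (rule suminf_le[OF bnd sn sM])
  also have "\<dots> = M' * W" using sums_unique[OF sums_mult2[OF M(2), of W]] by simp
  finally show "cmod (bf (Km \<kappa>' X) H K \<zeta> \<eta>) \<le> M' * C * fn K \<zeta> * fn H \<eta>"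
    by (simp add: W_def mult.assoc)
  qed
qed

lemma SB_limit:
  assumes k: "\<And>h k. ((\<lambda>j. \<kappa> j h k) \<longlongrightarrow> \<kappa>' h k) Fl" and nt: "Fl \<noteq> bot"
    and ev: "eventually (\<lambda>j. SB N (\<kappa> j) M) Fl"
  shows "SB N \<kappa>' M"
  unfolding SB_def
proof (intro allI impI)
  fix X C
  assume C: "0 \<le> C" and X: "Bnd N X C"
  show "Bnd N (Km \<kappa>' X) (M * C)" unfolding Bnd_def
  proof (intro allI impI)
  fix H K \<zeta> \<eta>
  assume HK: "finite H" "finite K" "H \<subseteq> ZN N" "K \<subseteq> ZN N"
  have "((\<lambda>j. cmod (bf (Km (\<kappa> j) X) H K \<zeta> \<eta>)) \<longlongrightarrow> cmod (bf (Km \<kappa>' X) H K \<zeta> \<eta>)) Fl"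
    unfolding bf_def by (intro tendsto_intros k)
  moreover have "eventually (\<lambda>j. cmod (bf (Km (\<kappa> j) X) H K \<zeta> \<eta>) \<le> M * C * fn K \<zeta> * fn H \<eta>) Fl"
    using ev by eventually_elim (use BndD[OF SBD[OF _ C X] HK] in blast)
  ultimately show "cmod (bf (Km \<kappa>' X) H K \<zeta> \<eta>) \<le> M * C * fn K \<zeta> * fn H \<eta>"
    using nt by (simp add: tendsto_upperbound)
  qed
qed

lemma partial_le_one:
  assumes "(\<lambda>n. (a n :: real)\<^sup>2) sums 1"
  shows "(\<Sum>n<m. (a n)\<^sup>2) \<le> 1"
  using sum_le_suminf[OF sums_summable[OF assms], of "{..<m}"] sums_unique[OF assms] by simp

lemma SB_gram:
  assumes k: "\<And>h k. (\<lambda>n. a n h * a n k) sums \<kappa> h k"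
    and d: "\<And>h. (\<lambda>n. (a n h)\<^sup>2) sums 1"
  shows "SB N \<kappa> 1"
  unfolding SB_def
proof (intro allI impI)
  fix X C
  assume C: "0 \<le> C" and X: "Bnd N X C"
  show "Bnd N (Km \<kappa> X) (1 * C)" unfolding Bnd_def
  proof (intro allI impI)
  fix H K \<zeta> \<eta>
  assume HK: "finite H" "finite K" "H \<subseteq> ZN N" "K \<subseteq> ZN N"
  define s where "s n = bf X H K (\<lambda>k. of_real (a n k) * \<zeta> k) (\<lambda>h. of_real (a n h) * \<eta> h)" for n
  define A where "A n = fn K (\<lambda>k. of_real (a n k) * \<zeta> k)" for n
  define B where "B n = fn H (\<lambda>h. of_real (a n h) * \<eta> h)" for n
  have s_eq: "s n = bf (Km (\<lambda>h k. a n h * a n k) X) H K \<zeta> \<eta>" for n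
    unfolding s_def bf_def by (intro sum.cong refl) (simp add: mult_ac)
  have ss: "s sums bf (Km \<kappa> X) H K \<zeta> \<eta>" unfolding s_eq by (rule bf_sums[OF k])
  have bnd: "norm (s n) \<le> C * A n * B n" for n
    unfolding s_def A_def B_def by (rule BndD[OF X HK])
  have LA: "L2_set A {..<m} \<le> fn K \<zeta>" for m
  proof -
    have "(\<Sum>n<m. (A n)\<^sup>2) = (\<Sum>n<m. \<Sum>k\<in>K. (a n k)\<^sup>2 * (cmod (\<zeta> k))\<^sup>2)"
      unfolding A_def L2_set_def using HK by (simp add: sum_nonneg norm_mult power_mult_distrib)
    also have "\<dots> = (\<Sum>k\<in>K. (\<Sum>n<m. (a n k)\<^sup>2) * (cmod (\<zeta> k))\<^sup>2)"
      by (subst sum.swap) (simp add: sum_distrib_right)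
    also have "\<dots> \<le> (\<Sum>k\<in>K. 1 * (cmod (\<zeta> k))\<^sup>2)"
      by (intro sum_mono mult_right_mono partial_le_one d) auto
    finally show ?thesis unfolding L2_set_def by (intro real_sqrt_le_mono) simp
  qed
  have LB: "L2_set B {..<m} \<le> fn H \<eta>" for m
  proof -
    have "(\<Sum>n<m. (B n)\<^sup>2) = (\<Sum>n<m. \<Sum>k\<in>H. (a n k)\<^sup>2 * (cmod (\<eta> k))\<^sup>2)"
      unfolding B_def L2_set_def using HK by (simp add: sum_nonneg norm_mult power_mult_distrib)
    also have "\<dots> = (\<Sum>k\<in>H. (\<Sum>n<m. (a n k)\<^sup>2) * (cmod (\<eta> k))\<^sup>2)"
      by (subst sum.swap) (simp add: sum_distrib_right)
    also have "\<dots> \<le> (\<Sum>k\<in>H. 1 * (cmod (\<eta> k))\<^sup>2)"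
      by (intro sum_mono mult_right_mono partial_le_one d) auto
    finally show ?thesis unfolding L2_set_def by (intro real_sqrt_le_mono) simp
  qed
  have part: "norm (\<Sum>n<m. s n) \<le> 1 * C * fn K \<zeta> * fn H \<eta>" for m
  proof -
    have "norm (\<Sum>n<m. s n) \<le> (\<Sum>n<m. norm (s n))" by (rule norm_sum)
    also have "\<dots> \<le> (\<Sum>n<m. C * (\<bar>A n\<bar> * \<bar>B n\<bar>))"
      by (intro sum_mono) (use bnd in \<open>simp add: A_def B_def mult.assoc\<close>)
    also have "\<dots> = C * (\<Sum>n<m. \<bar>A n\<bar> * \<bar>B n\<bar>)" by (simp add: sum_distrib_left)
    also have "\<dots> \<le> C * (L2_set A {..<m} * L2_set B {..<m})"
      by (intro mult_left_mono L2_set_mult_ineq C)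
    also have "\<dots> \<le> C * (fn K \<zeta> * fn H \<eta>)"
      by (intro mult_left_mono mult_mono LA LB C) auto
    finally show ?thesis by (simp add: mult.assoc)
  qed
  have "(\<lambda>m. norm (\<Sum>n<m. s n)) \<longlonglongrightarrow> norm (bf (Km \<kappa> X) H K \<zeta> \<eta>)"
    using ss unfolding sums_def by (intro tendsto_intros)
  then show "cmod (bf (Km \<kappa> X) H K \<zeta> \<eta>) \<le> 1 * C * fn K \<zeta> * fn H \<eta>"
    by (rule LIMSEQ_le_const2) (use part in auto)
  qed
qed

subsection \<open>Gaussian kernels\<close>

definition gk :: "nat \<Rightarrow> real \<Rightarrow> grp \<Rightarrow> grp \<Rightarrow> real" where
  "gk i u h k = exp (- u * (real_of_int (h i - k i))\<^sup>2)"

lemma SB_gk: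
  assumes u: "0 \<le> u"
  shows "SB N (gk i u) 1"
proof (rule SB_gram)
  define a where "a n h = exp (- u * (real_of_int (h i))\<^sup>2) * sqrt ((2 * u) ^ n / fact n) * (real_of_int (h i)) ^ n" for n h
  have sq: "(sqrt ((2 * u) ^ n / fact n))\<^sup>2 = (2 * u) ^ n / fact n" for n using u by simp
  show "(\<lambda>n. a n h * a n k) sums gk i u h k" for h k
  proof -
    let ?x = "real_of_int (h i)" and ?y = "real_of_int (k i)"
    have e: "a n h * a n k = exp (- u * (?x\<^sup>2 + ?y\<^sup>2)) * ((2 * u * ?x * ?y) ^ n /\<^sub>R fact n)" for n
    proof -
      have "a n h * a n k = exp (- u * ?x\<^sup>2) * exp (- u * ?y\<^sup>2) * (sqrt ((2 * u) ^ n / fact n))\<^sup>2 * (?x * ?y) ^ n"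
        unfolding a_def by (simp add: power2_eq_square power_mult_distrib mult_ac)
      also have "\<dots> = exp (- u * (?x\<^sup>2 + ?y\<^sup>2)) * ((2 * u * ?x * ?y) ^ n /\<^sub>R fact n)"
        unfolding sq by (simp add: exp_add[symmetric] power_mult_distrib algebra_simps divide_inverse)
      finally show ?thesis .
    qed
    have "(\<lambda>n. exp (- u * (?x\<^sup>2 + ?y\<^sup>2)) * ((2 * u * ?x * ?y) ^ n /\<^sub>R fact n)) sums (exp (- u * (?x\<^sup>2 + ?y\<^sup>2)) * exp (2 * u * ?x * ?y))"
      by (intro sums_mult exp_converges)
    moreover have "exp (- u * (?x\<^sup>2 + ?y\<^sup>2)) * exp (2 * u * ?x * ?y) = gk i u h k"
      unfolding gk_def by (simp add: exp_add[symmetric] power2_eq_square algebra_simps)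
    ultimately show ?thesis unfolding e by simp
  qed
  show "(\<lambda>n. (a n h)\<^sup>2) sums 1" for h
  proof -
    let ?x = "real_of_int (h i)"
    have e: "(a n h)\<^sup>2 = exp (- 2 * u * ?x\<^sup>2) * ((2 * u * ?x\<^sup>2) ^ n /\<^sub>R fact n)" for n
    proof -
      have "(a n h)\<^sup>2 = (exp (- u * ?x\<^sup>2))\<^sup>2 * (sqrt ((2 * u) ^ n / fact n))\<^sup>2 * (?x\<^sup>2) ^ n"
        unfolding a_def by (simp add: power_mult_distrib power_mult[symmetric] mult.commute)
      also have "\<dots> = exp (- 2 * u * ?x\<^sup>2) * ((2 * u * ?x\<^sup>2) ^ n /\<^sub>R fact n)"
        unfolding sq by (simp add: exp_add[symmetric] power2_eq_square power_mult_distrib algebra_simps divide_inverse)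
      finally show ?thesis .
    qed
    have "(\<lambda>n. exp (- 2 * u * ?x\<^sup>2) * ((2 * u * ?x\<^sup>2) ^ n /\<^sub>R fact n)) sums (exp (- 2 * u * ?x\<^sup>2) * exp (2 * u * ?x\<^sup>2))"
      by (intro sums_mult exp_converges)
    then show ?thesis unfolding e by (simp add: exp_add[symmetric])
  qed
qed

definition Dk :: "nat set \<Rightarrow> grp \<Rightarrow> grp \<Rightarrow> real" where
  "Dk I h k = (\<Sum>i\<in>I. (real_of_int (h i - k i))\<^sup>2)"

lemma Dk_nonneg: "0 \<le> Dk I h k" by (simp add: Dk_def sum_nonneg)

definition gauss :: "nat set \<Rightarrow> real \<Rightarrow> grp \<Rightarrow> grp \<Rightarrow> real" where
  "gauss I u h k = exp (- u * Dk I h k)"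

lemma SB_gauss:
  assumes "finite I" "0 \<le> u"
  shows "SB N (gauss I u) 1"
proof -
  have "gauss I u = (\<lambda>h k. \<Prod>i\<in>I. gk i u h k)"
    unfolding gauss_def gk_def Dk_def using assms(1)
    by (simp add: fun_eq_iff exp_sum[symmetric] sum_distrib_left)
  then show ?thesis using SB_prod[OF assms(1), of N "\<lambda>i. gk i u"] SB_gk[OF assms(2)] by simp
qed

section \<open>Exponential of the Euclidean distance\<close>

definition cc :: "nat \<Rightarrow> real" where
  "cc n = (if n = 0 then 1 else 0) - ((1/2::real) gchoose n) * (-1) ^ n"

lemma cc_sums:
  assumes "0 \<le> z" "z < 1"
  shows "(\<lambda>n. cc n * z ^ n) sums (1 - sqrt (1 - z))"
proof -
  have "(\<lambda>n. ((1/2::real) gchoose n) * (-z) ^ n) sums (1 + - z) powr (1/2)"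
    using assms by (intro gen_binomial_real) auto
  then have b: "(\<lambda>n. ((1/2::real) gchoose n) * (-z) ^ n) sums sqrt (1 - z)"
    using assms by (simp add: powr_half_sqrt)
  have o: "(\<lambda>n. if n = 0 then 1 else (0::real)) sums 1"
    using sums_single[of 0 "\<lambda>_. 1::real"] by simp
  have "(\<lambda>n. (if n = 0 then 1 else 0) - ((1/2::real) gchoose n) * (-z) ^ n) sums (1 - sqrt (1 - z))"
    by (rule sums_diff[OF o b])
  moreover have "cc n * z ^ n = (if n = 0 then 1 else 0) - ((1/2::real) gchoose n) * (-z) ^ n" for n
    by (cases "n = 0") (auto simp: cc_def algebra_simps power_minus[of z])
  ultimately show ?thesis by simp
qed

lemma half_prod_sign: "0 \<le> (\<Prod>i\<in>{0..k}. (1/2::real) - of_nat i) * (-1) ^ k"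
proof (induction k)
  case 0
  then show ?case by simp
next
  case (Suc k)
  have "(\<Prod>i\<in>{0..Suc k}. (1/2::real) - of_nat i) * (-1) ^ Suc k
      = ((\<Prod>i\<in>{0..k}. (1/2::real) - of_nat i) * (-1) ^ k) * (of_nat (Suc k) - 1/2)"
    by (simp add: prod.atLeast0_atMost_Suc algebra_simps)
  also have "\<dots> \<ge> 0" by (rule mult_nonneg_nonneg[OF Suc.IH]) simp
  finally show ?case .
qed

lemma cc_nonneg: "0 \<le> cc n"
proof (cases n)
  case 0
  then show ?thesis by (simp add: cc_def)
next
  case (Suc k)
  have "cc n = ((\<Prod>i\<in>{0..k}. (1/2::real) - of_nat i) * (-1) ^ k) / fact (Suc k)"
    unfolding cc_def Suc gbinomial_Suc by simp
  then show ?thesis using half_prod_sign[of k] by simp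
qed

lemma cc_sum_one: "0 \<le> q \<Longrightarrow> q < 1 \<Longrightarrow> (\<lambda>n. cc n * q ^ n) sums (1 - sqrt (1 - q))"
  by (rule cc_sums)

lemma gauss_pos: "0 < gauss I u h k" by (simp add: gauss_def)
lemma gauss_le1: "0 \<le> u \<Longrightarrow> gauss I u h k \<le> 1"
  using Dk_nonneg[of I h k] by (simp add: gauss_def mult_nonneg_nonneg)
lemma gauss_pow: "gauss I u h k ^ n = gauss I (real n * u) h k"
  unfolding gauss_def by (simp add: exp_of_nat_mult[symmetric] mult_ac)

definition Pk :: "nat set \<Rightarrow> real \<Rightarrow> real \<Rightarrow> grp \<Rightarrow> grp \<Rightarrow> real" where
  "Pk I q u h k = 1 - sqrt (1 - q * gauss I u h k)"

lemma SB_Pk: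
  assumes I: "finite I" and q: "0 \<le> q" "q < 1" and u: "0 \<le> u"
  shows "SB N (Pk I q u) (1 - sqrt (1 - q))"
proof (rule SB_series)
  show "(\<lambda>n. cc n * q ^ n * gauss I (real n * u) h k) sums Pk I q u h k" for h k
  proof -
    have "q * gauss I u h k \<le> q" using q gauss_le1[OF u, of I h k] by (simp add: mult_left_le)
    then have z: "0 \<le> q * gauss I u h k" "q * gauss I u h k < 1"
      using q gauss_pos[of I u h k] by auto
    have "(\<lambda>n. cc n * (q * gauss I u h k) ^ n) sums Pk I q u h k"
      unfolding Pk_def by (rule cc_sums[OF z])
    then show ?thesis by (simp add: power_mult_distrib gauss_pow mult_ac)
  qed
  show "SB N (\<lambda>h k. cc n * q ^ n * gauss I (real n * u) h k) (cc n * q ^ n)" for n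
  proof -
    have g: "SB N (gauss I (real n * u)) 1" by (rule SB_gauss[OF I]) (use u in simp)
    show ?thesis using SB_scale[OF g, of "cc n * q ^ n"] q cc_nonneg[of n] by simp
  qed
  show "0 \<le> cc n * q ^ n" for n using cc_nonneg[of n] q by simp
  show "(\<lambda>n. cc n * q ^ n) sums (1 - sqrt (1 - q))" by (rule cc_sums[OF q])
qed

lemma SB_expPk:
  assumes I: "finite I" and q: "0 \<le> q" "q < 1" and u: "0 \<le> u" and t: "0 \<le> \<tau>"
  shows "SB N (\<lambda>h k. exp (\<tau> * Pk I q u h k)) (exp (\<tau> * (1 - sqrt (1 - q))))"
proof (rule SB_series)
  let ?M = "1 - sqrt (1 - q)"
  have M0: "0 \<le> ?M" using q by simp
  show "(\<lambda>n. (\<tau> ^ n / fact n) * (Pk I q u h k) ^ n) sums exp (\<tau> * Pk I q u h k)" for h k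
    using exp_converges[of "\<tau> * Pk I q u h k"] by (simp add: power_mult_distrib divide_inverse mult_ac)
  show "SB N (\<lambda>h k. (\<tau> ^ n / fact n) * (Pk I q u h k) ^ n) ((\<tau> ^ n / fact n) * ?M ^ n)" for n
    by (rule SB_scale[OF SB_power[OF SB_Pk[OF I q u] M0]]) (use t M0 in auto)
  show "0 \<le> (\<tau> ^ n / fact n) * ?M ^ n" for n using t M0 by simp
  show "(\<lambda>n. (\<tau> ^ n / fact n) * ?M ^ n) sums exp (\<tau> * ?M)"
    using exp_converges[of "\<tau> * ?M"] by (simp add: power_mult_distrib divide_inverse mult_ac)
qed

definition ek :: "nat set \<Rightarrow> real \<Rightarrow> grp \<Rightarrow> grp \<Rightarrow> real" where
  "ek I t h k = exp (- t * sqrt (Dk I h k))"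

lemma key_limit_pos:
  assumes "D > (0::real)"
  shows "((\<lambda>u. (sqrt (1 - exp (- (u * u))) - sqrt (1 - exp (- (u * u) - D * u))) / sqrt u) \<longlongrightarrow> - (D powr (1/2))) (at_right 0)"
  using assms by real_asymp

lemma key_limit_zero:
  "((\<lambda>u. (sqrt (1 - exp (- (u * u))) - sqrt (1 - exp (- (u * u) - 0 * u))) / sqrt u) \<longlongrightarrow> 0) (at_right 0)"
  by real_asymp

lemma key_limit:
  assumes "0 \<le> (D::real)"
  shows "((\<lambda>u. (sqrt (1 - exp (- (u * u))) - sqrt (1 - exp (- (u * u) - D * u))) / sqrt u) \<longlongrightarrow> - sqrt D) (at_right 0)"
proof (cases "D = 0")
  case True
  then show ?thesis using key_limit_zero by simp
next
  case False
  then have "D > 0" using assms by simp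
  then show ?thesis using key_limit_pos[of D] by (simp add: powr_half_sqrt)
qed

lemma SB_ek:
  assumes I: "finite I" and t: "0 \<le> t"
  shows "SB N (ek I t) 1"
proof (rule SB_limit[where Fl = "at_right (0::real)"])
  define K where "K u h k = exp (- (t / sqrt u) * (1 - sqrt (1 - exp (- (u * u))))) * exp ((t / sqrt u) * Pk I (exp (- (u * u))) u h k)" for u h k
  show "at_right (0::real) \<noteq> bot" by simp
  show "\<forall>\<^sub>F u in at_right 0. SB N (K u) 1"
  proof -
    have *: "SB N (K u) 1" if u: "0 < u" for u
    proof -
      have q: "0 \<le> exp (- (u * u))" "exp (- (u * u)) < 1" using u by auto
      have M0: "0 \<le> exp ((t / sqrt u) * (1 - sqrt (1 - exp (- (u * u)))))" by simp
      have "SB N (\<lambda>h k. exp (- (t / sqrt u) * (1 - sqrt (1 - exp (- (u * u))))) * exp ((t / sqrt u) * Pk I (exp (- (u * u))) u h k))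
              (exp (- (t / sqrt u) * (1 - sqrt (1 - exp (- (u * u))))) * exp ((t / sqrt u) * (1 - sqrt (1 - exp (- (u * u))))))"
        by (rule SB_scale[OF SB_expPk[OF I q]]) (use u t in auto)
      then show ?thesis unfolding K_def by (simp add: exp_add[symmetric])
    qed
    have "\<forall>\<^sub>F u in at_right (0::real). 0 < u" by (rule eventually_at_right_less)
    then show ?thesis by eventually_elim (rule *)
  qed
  show "((\<lambda>u. K u h k) \<longlongrightarrow> ek I t h k) (at_right 0)" for h k
  proof -
    define D where "D = Dk I h k"
    have D: "0 \<le> D" by (simp add: D_def Dk_nonneg)
    have ev: "\<forall>\<^sub>F u in at_right 0. exp (t * ((sqrt (1 - exp (- (u * u))) - sqrt (1 - exp (- (u * u) - D * u))) / sqrt u)) = K u h k"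
    proof -
      have "exp (t * ((sqrt (1 - exp (- (u * u))) - sqrt (1 - exp (- (u * u) - D * u))) / sqrt u)) = K u h k" for u
      proof -
        have "exp (- (u * u)) * gauss I u h k = exp (- (u * u) - D * u)"
          by (simp add: gauss_def D_def exp_add[symmetric] algebra_simps)
        then show ?thesis unfolding K_def Pk_def by (simp add: exp_add[symmetric] algebra_simps diff_divide_distrib)
      qed
      then show ?thesis by simp
    qed
    have "((\<lambda>u. exp (t * ((sqrt (1 - exp (- (u * u))) - sqrt (1 - exp (- (u * u) - D * u))) / sqrt u))) \<longlongrightarrow> exp (t * - sqrt D)) (at_right 0)"
      by (intro tendsto_intros key_limit D)
    then have "((\<lambda>u. K u h k) \<longlongrightarrow> exp (t * - sqrt D)) (at_right 0)"
      using ev by (rule Lim_transform_eventually)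
    then show ?thesis by (simp add: ek_def D_def)
  qed
qed

section \<open>Matrices of operators and covariance\<close>

definition dlt :: "grp \<Rightarrow> vec" where
  "dlt k = (\<lambda>g. if g = k then 1 else 0)"

lemma delta_e_dlt: "delta_e = dlt gzero" by (simp add: delta_e_def dlt_def)

lemma L2_set_subset: "finite B \<Longrightarrow> A \<subseteq> B \<Longrightarrow> L2_set f A \<le> L2_set f B"
  unfolding L2_set_def by (intro real_sqrt_le_mono sum_mono2) auto

lemma fin_l2:
  assumes K: "finite K" "K \<subseteq> ZN N"
  shows "trunc K \<zeta> \<in> l2 N \<and> l2norm N (trunc K \<zeta>) \<le> fn K \<zeta>"
proof (rule l2I)
  show "g \<notin> ZN N \<Longrightarrow> trunc K \<zeta> g = 0" for g using K by (auto simp: trunc_def)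
  fix F assume F: "finite F" "F \<subseteq> ZN N"
  have "fn F (trunc K \<zeta>) = fn (F \<inter> K) \<zeta>"
    unfolding L2_set_def
    by (intro arg_cong[where f=sqrt] sum.mono_neutral_cong_right) (auto simp: trunc_def F)
  also have "\<dots> \<le> fn K \<zeta>" by (rule L2_set_subset[OF K(1)]) auto
  finally show "fn F (trunc K \<zeta>) \<le> fn K \<zeta>" .
qed

lemma dlt_l2: "k \<in> ZN N \<Longrightarrow> dlt k \<in> l2 N \<and> l2norm N (dlt k) \<le> 1"
proof -
  assume k: "k \<in> ZN N"
  have "trunc {k} (\<lambda>_. 1) = dlt k" by (auto simp: trunc_def dlt_def)
  then show ?thesis using fin_l2[of "{k}" N "\<lambda>_. 1"] k by (simp add: L2_set_def)
qed

lemma trunc_insert: "trunc (insert k K) \<zeta> = (\<lambda>g. \<zeta> k * dlt k g + trunc K \<zeta> g)" if "k \<notin> K"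
  using that unfolding trunc_def dlt_def by (intro ext) auto

lemma T_trunc:
  assumes T: "bounded_op N T" and K: "finite K" "K \<subseteq> ZN N"
  shows "T (trunc K \<zeta>) h = (\<Sum>k\<in>K. \<zeta> k * T (dlt k) h)"
  using K
proof (induction K rule: finite_induct)
  case empty
  have "trunc {} \<zeta> = (\<lambda>_. 0)" by (simp add: trunc_def)
  then show ?case using bop_zero[OF T] by simp
next
  case (insert k K)
  have "T (trunc (insert k K) \<zeta>) = (\<lambda>g. \<zeta> k * T (dlt k) g + T (trunc K \<zeta>) g)"
    unfolding trunc_insert[OF insert(2)]
    by (rule bop_lin[OF T]) (use insert dlt_l2 fin_l2 in auto)
  then show ?case using insert by simp
qed

lemma Bnd_op:
  assumes T: "bounded_op N T"
  shows "Bnd N (\<lambda>h k. T (dlt k) h) (opnorm N T)"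
  unfolding Bnd_def
proof (intro allI impI)
  fix H K \<zeta> \<eta> assume HK: "finite H" "finite K" "H \<subseteq> ZN N" "K \<subseteq> ZN N"
  let ?x = "trunc K \<zeta>"
  have x: "?x \<in> l2 N" "l2norm N ?x \<le> fn K \<zeta>" using fin_l2[OF HK(2,4)] by auto
  have "bf (\<lambda>h k. T (dlt k) h) H K \<zeta> \<eta> = (\<Sum>h\<in>H. T ?x h * cnj (\<eta> h))"
    unfolding bf_def T_trunc[OF T HK(2,4)] by (simp add: sum_distrib_left sum_distrib_right mult_ac)
  also have "cmod \<dots> \<le> (\<Sum>h\<in>H. \<bar>cmod (T ?x h)\<bar> * \<bar>cmod (\<eta> h)\<bar>)"
    by (rule order_trans[OF norm_sum]) (simp add: norm_mult)
  also have "\<dots> \<le> fn H (T ?x) * fn H \<eta>" by (rule L2_set_mult_ineq)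
  also have "\<dots> \<le> (opnorm N T * fn K \<zeta>) * fn H \<eta>"
  proof (rule mult_right_mono)
    have "fn H (T ?x) \<le> l2norm N (T ?x)" by (rule fn_le_l2norm[OF bop_l2[OF T x(1)] HK(1)])
    also have "\<dots> \<le> opnorm N T * l2norm N ?x" by (rule opnorm_bound[OF T x(1)])
    also have "\<dots> \<le> opnorm N T * fn K \<zeta>" by (intro mult_left_mono x(2) opnorm_nonneg T)
    finally show "fn H (T ?x) \<le> opnorm N T * fn K \<zeta>" .
  qed simp
  finally show "cmod (bf (\<lambda>h k. T (dlt k) h) H K \<zeta> \<eta>) \<le> opnorm N T * fn K \<zeta> * fn H \<eta>" .
qed

definition cov :: "nat \<Rightarrow> (grp \<Rightarrow> grp \<Rightarrow> complex) \<Rightarrow> op \<Rightarrow> bool" where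
  "cov N \<sigma> T \<longleftrightarrow> (\<forall>h\<in>ZN N. \<forall>k\<in>ZN N.
     T (dlt k) h = T delta_e (gadd (gneg k) h) * \<sigma> (gadd (gneg k) h) k)"

lemma gdiff_iff: "gadd (gneg g) (gadd (gneg k) h) = gzero \<longleftrightarrow> gadd (gneg g) h = k"
  unfolding fun_eq_iff gadd_apply gneg_apply gzero_apply by (smt (verit))

lemma gdiff_iff2: "gadd (gneg g) h = k \<longleftrightarrow> g = gadd (gneg k) h"
  unfolding fun_eq_iff gadd_apply gneg_apply by (smt (verit))

context fixes N :: nat and \<sigma> :: "grp \<Rightarrow> grp \<Rightarrow> complex"
  assumes coc: "normalized_cocycle N \<sigma>"
begin

lemma cov_Lam:
  assumes g: "g \<in> ZN N" shows "cov N \<sigma> (Lam N \<sigma> g)"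
  unfolding cov_def
proof (intro ballI)
  fix h k assume h: "h \<in> ZN N" and k: "k \<in> ZN N"
  have hk: "gadd (gneg k) h \<in> ZN N" using h k by simp
  show "Lam N \<sigma> g (dlt k) h = Lam N \<sigma> g delta_e (gadd (gneg k) h) * \<sigma> (gadd (gneg k) h) k"
  proof (cases "gadd (gneg g) h = k")
    case True
    then have "g = gadd (gneg k) h" by (simp add: gdiff_iff2)
    then show ?thesis using True h hk g normalized_cocycle_e[OF coc g]
      by (simp add: Lam_def dlt_def delta_e_def gdiff_iff)
  next
    case False
    then show ?thesis using h hk by (simp add: Lam_def dlt_def delta_e_def gdiff_iff)
  qed
qed

lemma cov_lincomb:
  assumes "finite F" "F \<subseteq> ZN N" shows "cov N \<sigma> (lincomb N \<sigma> c F)"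
  unfolding cov_def
proof (intro ballI)
  fix h k assume h: "h \<in> ZN N" and k: "k \<in> ZN N"
  have "lincomb N \<sigma> c F (dlt k) h = (\<Sum>g\<in>F. c g * (Lam N \<sigma> g delta_e (gadd (gneg k) h) * \<sigma> (gadd (gneg k) h) k))"
    unfolding lincomb_def
  proof (rule sum.cong[OF refl])
    fix g assume "g \<in> F"
    then have "g \<in> ZN N" using assms(2) by blast
    then have "cov N \<sigma> (Lam N \<sigma> g)" by (rule cov_Lam)
    then show "c g * Lam N \<sigma> g (dlt k) h = c g * (Lam N \<sigma> g delta_e (gadd (gneg k) h) * \<sigma> (gadd (gneg k) h) k)"
      using h k unfolding cov_def by simp
  qed
  then show "lincomb N \<sigma> c F (dlt k) h = lincomb N \<sigma> c F delta_e (gadd (gneg k) h) * \<sigma> (gadd (gneg k) h) k"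
    by (simp add: lincomb_def sum_distrib_left sum_distrib_right mult_ac)
qed

lemma cov_opdiff: "cov N \<sigma> S \<Longrightarrow> cov N \<sigma> T \<Longrightarrow> cov N \<sigma> (opdiff S T)"
  by (simp add: cov_def opdiff_apply algebra_simps)

lemma pt_opdiff_bound:
  assumes S: "bounded_op N S" and T: "bounded_op N T" and k: "k \<in> ZN N"
  shows "cmod (S (dlt k) h - T (dlt k) h) \<le> opnorm N (opdiff S T)"
proof -
  have d: "dlt k \<in> l2 N" "l2norm N (dlt k) \<le> 1" using dlt_l2[OF k] by auto
  have "cmod (S (dlt k) h - T (dlt k) h) = cmod (opdiff S T (dlt k) h)" by (simp add: opdiff_apply)
  also have "\<dots> \<le> l2norm N (opdiff S T (dlt k))" by (rule l2_pt[OF bop_l2[OF bop_opdiff[OF S T] d(1)]])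
  also have "\<dots> \<le> opnorm N (opdiff S T) * l2norm N (dlt k)" by (rule opnorm_bound[OF bop_opdiff[OF S T] d(1)])
  also have "\<dots> \<le> opnorm N (opdiff S T) * 1"
    by (intro mult_left_mono d(2) opnorm_nonneg bop_opdiff S T)
  finally show ?thesis by simp
qed

lemma cov_limit:
  assumes x: "bounded_op N x"
    and app: "\<And>e. e > 0 \<Longrightarrow> \<exists>a. bounded_op N a \<and> cov N \<sigma> a \<and> opnorm N (opdiff x a) < e"
  shows "cov N \<sigma> x"
  unfolding cov_def
proof (intro ballI)
  fix h k assume h: "h \<in> ZN N" and k: "k \<in> ZN N"
  have hk: "gadd (gneg k) h \<in> ZN N" using h k by simp
  have sn: "cmod (\<sigma> (gadd (gneg k) h) k) = 1" using normalized_cocycle_norm[OF coc hk k] .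
  let ?z = "x (dlt k) h - x delta_e (gadd (gneg k) h) * \<sigma> (gadd (gneg k) h) k"
  have *: "cmod ?z \<le> 2 * e" if e: "e > 0" for e
  proof -
    obtain a where a: "bounded_op N a" "cov N \<sigma> a" "opnorm N (opdiff x a) < e" using app[OF e] by blast
    have eq: "a (dlt k) h = a delta_e (gadd (gneg k) h) * \<sigma> (gadd (gneg k) h) k"
      using a(2) h k by (simp add: cov_def)
    let ?A = "x (dlt k) h - a (dlt k) h"
    let ?B = "x delta_e (gadd (gneg k) h) - a delta_e (gadd (gneg k) h)"
    have "?z = ?A - ?B * \<sigma> (gadd (gneg k) h) k"
      using eq by (simp add: algebra_simps)
    then have "cmod ?z \<le> cmod ?A + cmod (?B * \<sigma> (gadd (gneg k) h) k)"
      by (simp only: norm_triangle_ineq4)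
    also have "cmod (?B * \<sigma> (gadd (gneg k) h) k) = cmod ?B"
      by (simp only: norm_mult sn mult_1_right)
    also have "cmod ?A \<le> opnorm N (opdiff x a)" by (rule pt_opdiff_bound[OF x a(1) k])
    also have "cmod ?B \<le> opnorm N (opdiff x a)"
      unfolding delta_e_dlt by (rule pt_opdiff_bound[OF x a(1) gzero_ZN])
    finally show ?thesis using a(3) by linarith
  qed
  have "cmod ?z \<le> 0"
  proof (rule field_le_epsilon)
    fix e :: real assume "0 < e"
    then have "cmod ?z \<le> 2 * (e / 2)" by (intro *) simp
    then show "cmod ?z \<le> 0 + e" by simp
  qed
  then show "x (dlt k) h = x delta_e (gadd (gneg k) h) * \<sigma> (gadd (gneg k) h) k" by simp
qed

lemma Cstar_cov:
  assumes "x \<in> Cstar_r N \<sigma>" shows "bounded_op N x" "cov N \<sigma> x"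
proof -
  show x: "bounded_op N x" using assms by (simp add: Cstar_r_def)
  show "cov N \<sigma> x"
  proof (rule cov_limit[OF x])
    fix e :: real assume "e > 0"
    then obtain F c where F: "finite F" "F \<subseteq> ZN N" "opnorm N (opdiff x (lincomb N \<sigma> c F)) < e"
      using assms unfolding Cstar_r_def by blast
    have "bounded_op N (lincomb N \<sigma> c F)" by (rule bop_lincomb[OF coc F(1,2)])
    moreover have "cov N \<sigma> (lincomb N \<sigma> c F)" by (rule cov_lincomb[OF F(1,2)])
    ultimately show "\<exists>a. bounded_op N a \<and> cov N \<sigma> a \<and> opnorm N (opdiff x a) < e"
      using F(3) by blast
  qed
qed

end

section \<open>Summability of the symbols\<close>

lemma sum_int_geom:
  assumes s: "0 < s" "s < 1"
  shows "(\<lambda>n::int. s powr \<bar>real_of_int n\<bar>) summable_on UNIV"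
proof -
  have g: "(\<lambda>n::nat. s ^ n) summable_on UNIV"
    using s by (subst summable_on_UNIV_nonneg_real_iff) (auto intro: summable_geometric)
  have A: "(\<lambda>n::int. s powr \<bar>real_of_int n\<bar>) summable_on range int"
    by (subst summable_on_reindex) (use g s in \<open>auto simp: o_def powr_realpow\<close>)
  have B: "(\<lambda>n::int. s powr \<bar>real_of_int n\<bar>) summable_on range (\<lambda>n. - int n)"
    by (subst summable_on_reindex) (use g s in \<open>auto simp: o_def powr_realpow inj_on_def\<close>)
  have "UNIV = range int \<union> range (\<lambda>n. - int n)"
  proof (rule set_eqI, rule iffI)
    fix n :: int assume "n \<in> UNIV"
    show "n \<in> range int \<union> range (\<lambda>n. - int n)"
    proof (cases "0 \<le> n")
      case True
      then have "n = int (nat n)" by simp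
      then show ?thesis by blast
    next
      case False
      then have "n = - int (nat (- n))" by simp
      then show ?thesis by blast
    qed
  qed simp
  then show ?thesis using summable_on_union[OF A B] by simp
qed

lemma ZN_0: "ZN 0 = {gzero}"
  by (auto simp: ZN_def gzero_def fun_eq_iff)

lemma ZN_Suc: "ZN (Suc N) = (\<lambda>(g, n). g(N := n)) ` (ZN N \<times> UNIV)"
proof (rule set_eqI, rule iffI)
  fix f assume f: "f \<in> ZN (Suc N)"
  have "f = (f(N := 0))(N := f N)" by simp
  moreover have "f(N := 0) \<in> ZN N" using f by (auto simp: ZN_def)
  ultimately show "f \<in> (\<lambda>(g, n). g(N := n)) ` (ZN N \<times> UNIV)" by (auto intro!: image_eqI[where x="(f(N := 0), f N)"])
qed (auto simp: ZN_def)

lemma inj_ZN_Suc: "inj_on (\<lambda>(g, n). g(N := n)) (ZN N \<times> UNIV)"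
proof (rule inj_onI, clarify)
  fix g n g' n' assume g: "g \<in> ZN N" "g' \<in> ZN N" and e: "g(N := n) = g'(N := n')"
  have "n = n'" using fun_cong[OF e, of N] by simp
  moreover have "g = g'"
  proof
    fix i show "g i = g' i"
      using fun_cong[OF e, of i] g by (cases "i = N") (auto simp: ZN_def)
  qed
  ultimately show "g = g' \<and> n = n'" by simp
qed

lemma L1_upd: "g \<in> ZN N \<Longrightarrow> L1 (Suc N) (g(N := n)) = L1 N g + \<bar>real_of_int n\<bar>"
  unfolding L1_def by (simp add: ZN_def)

lemma sumL1:
  assumes s: "0 < s" "s < 1"
  shows "(\<lambda>g. s powr L1 N g) summable_on ZN N"
proof (induction N)
  case 0
  then show ?case by (simp add: ZN_0)
next
  case (Suc N)
  let ?S = "infsum (\<lambda>n::int. s powr \<bar>real_of_int n\<bar>) UNIV"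
  have "(\<lambda>(g, n). s powr L1 N g * s powr \<bar>real_of_int n\<bar>) summable_on Sigma (ZN N) (\<lambda>_. UNIV)"
    apply (rule summable_on_SigmaI[where g = "\<lambda>g. s powr L1 N g * ?S"])
    subgoal by (simp only: case_prod_conv) (intro has_sum_cmult_right has_sum_infsum sum_int_geom s)
    subgoal by (intro summable_on_cmult_left Suc)
    subgoal by simp
    done
  then have "((\<lambda>g. s powr L1 (Suc N) g) \<circ> (\<lambda>(g, n). g(N := n))) summable_on (ZN N \<times> UNIV)"
    by (rule summable_on_cong[THEN iffD1, rotated]) (auto simp: L1_upd powr_add)
  then have "(\<lambda>g. s powr L1 (Suc N) g) summable_on (\<lambda>(g, n). g(N := n)) ` (ZN N \<times> UNIV)"
    using summable_on_reindex[OF inj_ZN_Suc] by blast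
  then show ?case by (simp only: ZN_Suc)
qed

lemma abs_le_sq_int: "\<bar>real_of_int x\<bar> \<le> (real_of_int x)\<^sup>2"
proof (cases "x = 0")
  case False
  then have "1 \<le> \<bar>real_of_int x\<bar>" by linarith
  then have "\<bar>real_of_int x\<bar> * 1 \<le> \<bar>real_of_int x\<bar> * \<bar>real_of_int x\<bar>" by (intro mult_left_mono) auto
  then show ?thesis by (simp add: power2_eq_square abs_mult_self_eq)
qed simp

lemma L1_le_L2sq: "L1 N g \<le> L2sq N g"
  unfolding L1_def L2sq_def by (intro sum_mono abs_le_sq_int)

lemma L1_le_L2: "L1 N g \<le> real N * L2 N g"
proof -
  have "\<bar>real_of_int (g i)\<bar> \<le> L2 N g" if "i < N" for i
  proof -
    have "(real_of_int (g i))\<^sup>2 \<le> (\<Sum>i<N. (real_of_int (g i))\<^sup>2)"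
      using that by (intro member_le_sum) auto
    then show ?thesis unfolding L2_def by (metis real_sqrt_abs real_sqrt_le_mono)
  qed
  then have "L1 N g \<le> (\<Sum>i<N. L2 N g)" unfolding L1_def by (intro sum_mono) auto
  then show ?thesis by simp
qed

lemma L_nonneg: "L = L1 N \<or> L = L2 N \<or> L = L2sq N \<Longrightarrow> 0 \<le> L g"
  by (auto simp: L1_def L2_def L2sq_def sum_nonneg)

lemma sum_phi:
  assumes L: "L = L1 N \<or> L = L2 N \<or> L = L2sq N" and r: "0 < r" "r < 1"
  shows "(\<lambda>g. r powr L g) summable_on ZN N"
proof -
  have c1: "L = L1 N \<Longrightarrow> ?thesis" using sumL1[OF r] by simp
  have c2: "L = L2sq N \<Longrightarrow> ?thesis"
  proof -
    assume "L = L2sq N"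
    then show ?thesis
      by (rule ssubst, intro summable_on_comparison_test[OF sumL1[OF r]])
         (use r in \<open>auto intro: powr_mono' L1_le_L2sq\<close>)
  qed
  have c3: "L = L2 N \<Longrightarrow> ?thesis"
  proof -
    assume L2: "L = L2 N"
    show ?thesis
    proof (cases "N = 0")
      case True
      then show ?thesis by (simp add: ZN_0)
    next
      case False
      define s where "s = r powr (1 / real N)"
      have s: "0 < s" "s < 1"
        using r False powr_less_mono2[of "1 / real N" r 1] by (auto simp: s_def)
      have "r powr L g \<le> s powr L1 N g" for g
      proof -
        have "L1 N g / real N \<le> L2 N g" using L1_le_L2[of N g] False by (simp add: field_simps)
        then have "r powr L2 N g \<le> r powr (L1 N g / real N)" using r by (intro powr_mono') auto
        also have "\<dots> = s powr L1 N g" by (simp add: s_def powr_powr)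
        finally show ?thesis by (simp add: L2)
      qed
      then show ?thesis
        by (intro summable_on_comparison_test[OF sumL1[OF s]]) auto
    qed
  qed
  show ?thesis using L c1 c2 c3 by blast
qed

section \<open>The uniform bound\<close>

lemma gdiff_diff: "gadd (gneg (gadd (gneg k) h)) h = k"
  by (rule ext) (simp add: gadd_apply gneg_apply)

lemma sq_le_imp_le: "(x::real)\<^sup>2 \<le> A * x \<Longrightarrow> 0 \<le> x \<Longrightarrow> 0 \<le> A \<Longrightarrow> x \<le> A"
  by (cases "x = 0") (auto simp: power2_eq_square)

context fixes N :: nat and \<sigma> :: "grp \<Rightarrow> grp \<Rightarrow> complex"
  assumes coc: "normalized_cocycle N \<sigma>"
begin

lemma Op_trunc:
  assumes cv: "cov N \<sigma> T" and K: "finite K" "K \<subseteq> ZN N" and h: "h \<in> ZN N"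
  shows "Op N \<sigma> (\<lambda>g. of_real (ph g) * T delta_e g) (trunc K \<xi>) h
       = (\<Sum>k\<in>K. of_real (ph (gadd (gneg k) h)) * T (dlt k) h * \<xi> k)"
proof -
  let ?c = "\<lambda>g. of_real (ph g) * T delta_e g"
  let ?f = "\<lambda>g. ?c g * Lam N \<sigma> g (trunc K \<xi>) h"
  let ?S = "(\<lambda>k. gadd (gneg k) h) ` K"
  have S: "?S \<subseteq> ZN N" using K h by auto
  have "Op N \<sigma> ?c (trunc K \<xi>) h = infsum ?f (ZN N)" by (simp add: Op_def)
  also have "\<dots> = infsum ?f ?S"
  proof (rule infsum_cong_neutral)
    fix g assume g: "g \<in> ZN N - ?S"
    have "gadd (gneg g) h \<notin> K"
    proof
      assume "gadd (gneg g) h \<in> K"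
      moreover have "g = gadd (gneg (gadd (gneg g) h)) h" by (simp add: gdiff_diff)
      ultimately show False using g by blast
    qed
    then show "?f g = 0" by (simp add: Lam_def trunc_def)
  qed (use S in auto)
  also have "\<dots> = sum ?f ?S" using K by simp
  also have "\<dots> = (\<Sum>k\<in>K. ?f (gadd (gneg k) h))"
  proof (rule sum.reindex[unfolded o_def])
    show "inj_on (\<lambda>k. gadd (gneg k) h) K"
      by (rule inj_onI) (metis gdiff_diff)
  qed
  also have "\<dots> = (\<Sum>k\<in>K. of_real (ph (gadd (gneg k) h)) * T (dlt k) h * \<xi> k)"
  proof (rule sum.cong[OF refl])
    fix k assume k: "k \<in> K"
    then have kz: "k \<in> ZN N" using K by auto
    have "T (dlt k) h = T delta_e (gadd (gneg k) h) * \<sigma> (gadd (gneg k) h) k"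
      using cv h kz by (simp add: cov_def)
    then show "?f (gadd (gneg k) h) = of_real (ph (gadd (gneg k) h)) * T (dlt k) h * \<xi> k"
      using h k by (simp add: Lam_def trunc_def gdiff_diff mult_ac)
  qed
  finally show ?thesis .
qed

lemma Op_bound:
  assumes T: "bounded_op N T" and cv: "cov N \<sigma> T"
    and sb: "SB N (\<lambda>h k. ph (gadd (gneg k) h)) 1"
    and c: "csum N (\<lambda>g. of_real (ph g) * T delta_e g) B"
  shows "opnorm N (Op N \<sigma> (\<lambda>g. of_real (ph g) * T delta_e g)) \<le> opnorm N T"
proof -
  let ?c = "\<lambda>g. of_real (ph g) * T delta_e g"
  let ?y = "Op N \<sigma> ?c"
  let ?X = "\<lambda>h k. T (dlt k) h"
  let ?\<kappa> = "\<lambda>h k. ph (gadd (gneg k) h)"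
  have B0: "0 \<le> B" using c by (auto simp: csum_def dest: spec[of _ "{}"])
  have y: "bounded_op N ?y" by (rule bop_Op[OF coc c])
  have BK: "Bnd N (Km ?\<kappa> ?X) (1 * opnorm N T)"
    by (rule SBD[OF sb opnorm_nonneg[OF T] Bnd_op[OF T]])
  have fin: "l2norm N (?y (trunc K \<xi>)) \<le> opnorm N T * fn K \<xi>" if K: "finite K" "K \<subseteq> ZN N" for K \<xi>
  proof -
    let ?v = "?y (trunc K \<xi>)"
    have "?v \<in> l2 N \<and> l2norm N ?v \<le> opnorm N T * fn K \<xi>"
    proof (rule l2I)
      show "g \<notin> ZN N \<Longrightarrow> ?v g = 0" for g by (simp add: Op_def Lam_out[OF coc])
      fix H assume H: "finite H" "H \<subseteq> ZN N"
      have "bf (Km ?\<kappa> ?X) H K \<xi> ?v = (\<Sum>h\<in>H. ?v h * cnj (?v h))"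
        unfolding bf_def
      proof (rule sum.cong[OF refl])
        fix h assume "h \<in> H"
        then have h: "h \<in> ZN N" using H by auto
        show "(\<Sum>k\<in>K. of_real (?\<kappa> h k) * ?X h k * \<xi> k * cnj (?v h)) = ?v h * cnj (?v h)"
          unfolding Op_trunc[OF cv K h] by (simp add: sum_distrib_right)
      qed
      also have "\<dots> = of_real ((fn H ?v)\<^sup>2)"
        unfolding L2_set_def using H by (simp add: complex_mult_cnj cmod_power2 sum_nonneg)
      finally have "(fn H ?v)\<^sup>2 = cmod (bf (Km ?\<kappa> ?X) H K \<xi> ?v)" by (simp add: norm_power)
      also have "\<dots> \<le> 1 * opnorm N T * fn K \<xi> * fn H ?v" by (rule BndD[OF BK H(1) K(1) H(2) K(2)])
      finally have "(fn H ?v)\<^sup>2 \<le> (opnorm N T * fn K \<xi>) * fn H ?v" by simp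
      then show "fn H ?v \<le> opnorm N T * fn K \<xi>"
        by (rule sq_le_imp_le) (auto intro!: mult_nonneg_nonneg opnorm_nonneg[OF T])
    qed
    then show ?thesis by simp
  qed
  show ?thesis
  proof (rule opnorm_le[OF _ opnorm_nonneg[OF T]])
    fix \<xi> assume x: "\<xi> \<in> l2 N"
    show "l2norm N (?y \<xi>) \<le> opnorm N T * l2norm N \<xi>"
    proof (rule field_le_epsilon)
      fix e :: real assume e: "0 < e"
      obtain K where K: "finite K" "K \<subseteq> ZN N" "l2norm N (\<lambda>g. \<xi> g - trunc K \<xi> g) \<le> e / (B + 1)"
        using trunc_approx[OF x, of "e / (B + 1)"] e B0 by auto
      have t: "trunc K \<xi> \<in> l2 N" using trunc_l2[OF x] by blast
      have d: "(\<lambda>g. \<xi> g - trunc K \<xi> g) \<in> l2 N" using l2_diff[OF x t] by blast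
      have "?y \<xi> = ?y (\<lambda>g. trunc K \<xi> g + (\<xi> g - trunc K \<xi> g))" by simp
      also have "\<dots> = (\<lambda>g. ?y (trunc K \<xi>) g + ?y (\<lambda>g. \<xi> g - trunc K \<xi> g) g)"
        by (rule bop_add[OF y t d])
      finally have "l2norm N (?y \<xi>) \<le> l2norm N (?y (trunc K \<xi>)) + l2norm N (?y (\<lambda>g. \<xi> g - trunc K \<xi> g))"
        using l2_add[OF bop_l2[OF y t] bop_l2[OF y d]] by simp
      also have "\<dots> \<le> opnorm N T * l2norm N \<xi> + B * (e / (B + 1))"
      proof (rule add_mono)
        have "l2norm N (?y (trunc K \<xi>)) \<le> opnorm N T * fn K \<xi>" by (rule fin[OF K(1,2)])
        also have "\<dots> \<le> opnorm N T * l2norm N \<xi>"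
          by (intro mult_left_mono fn_le_l2norm x K(1) opnorm_nonneg T)
        finally show "l2norm N (?y (trunc K \<xi>)) \<le> opnorm N T * l2norm N \<xi>" .
        have "l2norm N (?y (\<lambda>g. \<xi> g - trunc K \<xi> g)) \<le> B * l2norm N (\<lambda>g. \<xi> g - trunc K \<xi> g)"
          using Op_l2[OF coc c d] by blast
        also have "\<dots> \<le> B * (e / (B + 1))" by (intro mult_left_mono K(3) B0)
        finally show "l2norm N (?y (\<lambda>g. \<xi> g - trunc K \<xi> g)) \<le> B * (e / (B + 1))" .
      qed
      also have "B * (e / (B + 1)) \<le> e"
        using B0 e by (simp add: field_simps)
      finally show "l2norm N (?y \<xi>) \<le> opnorm N T * l2norm N \<xi> + e" by simp
    qed
  qed
qed

end

lemma powr_as_exp: "0 < (r::real) \<Longrightarrow> r powr x = exp (- (- ln r) * x)"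
proof -
  assume r: "0 < r"
  have "r powr x = exp (x * ln r)" using r unfolding powr_def by simp
  also have "\<dots> = exp (ln r * x)" by (rule arg_cong[where f=exp], rule mult.commute)
  finally show ?thesis by simp
qed

lemma SB_L:
  assumes L: "L = L1 N \<or> L = L2 N \<or> L = L2sq N" and r: "0 < r" "r < 1"
  shows "SB N (\<lambda>h k. r powr L (gadd (gneg k) h)) 1"
proof -
  define t where "t = - ln r"
  have t: "0 \<le> t" using r by (simp add: t_def)
  have D: "(\<Sum>i<N. (real_of_int (gadd (gneg k) h i))\<^sup>2) = Dk {..<N} h k" for h k
    by (simp add: Dk_def gadd_apply gneg_apply)
  have c1: "L = L2sq N \<Longrightarrow> ?thesis"
  proof -
    assume "L = L2sq N"
    then have "(\<lambda>h k. r powr L (gadd (gneg k) h)) = gauss {..<N} t"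
      using r by (simp add: fun_eq_iff L2sq_def D gauss_def powr_as_exp t_def)
    then show ?thesis using SB_gauss[OF _ t] by simp
  qed
  have c2: "L = L2 N \<Longrightarrow> ?thesis"
  proof -
    assume "L = L2 N"
    then have "(\<lambda>h k. r powr L (gadd (gneg k) h)) = ek {..<N} t"
      using r by (simp add: fun_eq_iff L2_def D ek_def powr_as_exp t_def)
    then show ?thesis using SB_ek[OF _ t] by simp
  qed
  have c3: "L = L1 N \<Longrightarrow> ?thesis"
  proof -
    assume "L = L1 N"
    then have "(\<lambda>h k. r powr L (gadd (gneg k) h)) = (\<lambda>h k. \<Prod>i\<in>{..<N}. ek {i} t h k)"
      using r by (simp add: fun_eq_iff L1_def ek_def Dk_def powr_as_exp t_def exp_sum[symmetric]
            sum_distrib_left gadd_apply gneg_apply)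
    then show ?thesis using SB_prod[of "{..<N}" N "\<lambda>i. ek {i} t"] SB_ek[OF _ t] by simp
  qed
  show ?thesis using L c1 c2 c3 by blast
qed

lemma delta_e_l2: "delta_e \<in> l2 N" "l2norm N delta_e \<le> 1"
  using dlt_l2[OF gzero_ZN, of N] by (auto simp: delta_e_dlt)

lemma xhat_bound:
  assumes T: "bounded_op N T" shows "cmod (xhat T g) \<le> opnorm N T"
proof -
  have "cmod (xhat T g) \<le> l2norm N (T delta_e)"
    unfolding xhat_def by (rule l2_pt[OF bop_l2[OF T delta_e_l2(1)]])
  also have "\<dots> \<le> opnorm N T * l2norm N delta_e" by (rule opnorm_bound[OF T delta_e_l2(1)])
  also have "\<dots> \<le> opnorm N T * 1" by (intro mult_left_mono delta_e_l2(2) opnorm_nonneg T)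
  finally show ?thesis by simp
qed

lemma coef_summable:
  assumes L: "L = L1 N \<or> L = L2 N \<or> L = L2sq N" and r: "0 < r" "r < 1" and T: "bounded_op N T"
  shows "(\<lambda>g. cmod (complex_of_real (r powr L g) * xhat T g)) summable_on ZN N"
proof (rule summable_on_comparison_test)
  show "(\<lambda>g. r powr L g * opnorm N T) summable_on ZN N"
    by (intro summable_on_cmult_left sum_phi[OF L r])
  show "cmod (complex_of_real (r powr L g) * xhat T g) \<le> r powr L g * opnorm N T" for g
    using xhat_bound[OF T, of g] r by (simp add: norm_mult mult_left_mono)
qed simp

context fixes N :: nat and \<sigma> :: "grp \<Rightarrow> grp \<Rightarrow> complex"
  assumes coc: "normalized_cocycle N \<sigma>"
begin

lemma fl_unique:
  assumes y1: "fourier_lim N \<sigma> \<phi> x y1" and y2: "fourier_lim N \<sigma> \<phi> x y2" and xi: "\<xi> \<in> l2 N"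
  shows "y1 \<xi> = y2 \<xi>"
proof -
  let ?L = "\<lambda>F. lincomb N \<sigma> (\<lambda>g. \<phi> g * xhat x g) F"
  have b1: "bounded_op N y1" and b2: "bounded_op N y2" using y1 y2 by (auto simp: fourier_lim_def)
  have t1: "((\<lambda>F. opnorm N (opdiff y1 (?L F))) \<longlongrightarrow> 0) (finite_subsets_at_top (ZN N))"
    using y1 by (simp add: fourier_lim_def)
  have t2: "((\<lambda>F. opnorm N (opdiff y2 (?L F))) \<longlongrightarrow> 0) (finite_subsets_at_top (ZN N))"
    using y2 by (simp add: fourier_lim_def)
  have t: "((\<lambda>F. opnorm N (opdiff y1 (?L F)) + opnorm N (opdiff y2 (?L F))) \<longlongrightarrow> 0 + 0) (finite_subsets_at_top (ZN N))"
    by (intro tendsto_add t1 t2)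
  have ev: "\<forall>\<^sub>F F in finite_subsets_at_top (ZN N). opnorm N (opdiff y1 y2) \<le> opnorm N (opdiff y1 (?L F)) + opnorm N (opdiff y2 (?L F))"
  proof (rule eventually_finite_subsets_at_top_weakI)
    fix F assume F: "finite F" "F \<subseteq> ZN N"
    have bL: "bounded_op N (?L F)" by (rule bop_lincomb[OF coc F])
    have "opnorm N (opdiff y1 y2) \<le> opnorm N (opdiff y1 (?L F)) + opnorm N (opdiff (?L F) y2)"
      by (rule opnorm_opdiff_tri[OF b1 bL b2])
    then show "opnorm N (opdiff y1 y2) \<le> opnorm N (opdiff y1 (?L F)) + opnorm N (opdiff y2 (?L F))"
      by (simp add: opnorm_opdiff_sym[of N "?L F" y2])
  qed
  have "opnorm N (opdiff y1 y2) \<le> 0 + 0"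
    by (rule tendsto_le[OF _ t tendsto_const ev]) simp
  then show ?thesis by (intro opnorm_opdiff_eq0[OF b1 b2 _ xi]) simp
qed

lemma xhat_lincomb:
  assumes F: "finite F" "F \<subseteq> ZN N" and g: "g \<in> ZN N"
  shows "xhat (lincomb N \<sigma> c F) g = (if g \<in> F then c g else 0)"
proof -
  have "xhat (lincomb N \<sigma> c F) g = (\<Sum>g'\<in>F. c g' * (if g' = g then 1 else 0))"
    unfolding xhat_def lincomb_def
  proof (rule sum.cong[OF refl])
    fix g' assume "g' \<in> F"
    then have g': "g' \<in> ZN N" using F by auto
    show "c g' * Lam N \<sigma> g' delta_e g = c g' * (if g' = g then 1 else 0)"
      using g g' normalized_cocycle_e[OF coc g']
      by (auto simp: Lam_def delta_e_def gadd_eq_iff)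
  qed
  also have "\<dots> = (\<Sum>g'\<in>F. if g' = g then c g' else 0)" by (rule sum.cong) auto
  also have "\<dots> = (if g \<in> F then c g else 0)" using F by (simp add: sum.delta)
  finally show ?thesis .
qed

lemma Op_of_lincomb:
  assumes F: "finite F" "F \<subseteq> ZN N"
  shows "Op N \<sigma> (\<lambda>g. \<phi> g * xhat (lincomb N \<sigma> c F) g) \<xi> = lincomb N \<sigma> (\<lambda>g. \<phi> g * c g) F \<xi>"
proof
  fix h
  have "Op N \<sigma> (\<lambda>g. \<phi> g * xhat (lincomb N \<sigma> c F) g) \<xi> h
      = infsum (\<lambda>g. \<phi> g * xhat (lincomb N \<sigma> c F) g * Lam N \<sigma> g \<xi> h) F"
    unfolding Op_def
  proof (rule infsum_cong_neutral)
    fix g assume "g \<in> ZN N - F"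
    then show "\<phi> g * xhat (lincomb N \<sigma> c F) g * Lam N \<sigma> g \<xi> h = 0"
      using xhat_lincomb[OF F, of g] by simp
  qed (use F xhat_lincomb[OF F] in auto)
  also have "\<dots> = (\<Sum>g\<in>F. \<phi> g * xhat (lincomb N \<sigma> c F) g * Lam N \<sigma> g \<xi> h)"
    using F by simp
  also have "\<dots> = (\<Sum>g\<in>F. \<phi> g * c g * Lam N \<sigma> g \<xi> h)"
  proof (rule sum.cong[OF refl])
    fix g assume "g \<in> F"
    then show "\<phi> g * xhat (lincomb N \<sigma> c F) g * Lam N \<sigma> g \<xi> h = \<phi> g * c g * Lam N \<sigma> g \<xi> h"
      using F xhat_lincomb[OF F, of g] by auto
  qed
  also have "\<dots> = lincomb N \<sigma> (\<lambda>g. \<phi> g * c g) F \<xi> h" by (simp add: lincomb_def)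
  finally show "Op N \<sigma> (\<lambda>g. \<phi> g * xhat (lincomb N \<sigma> c F) g) \<xi> h = lincomb N \<sigma> (\<lambda>g. \<phi> g * c g) F \<xi> h" .
qed

lemma Op_diff:
  assumes c1: "csum N c1 B1" and c2: "csum N c2 B2" and xi: "\<xi> \<in> l2 N"
  shows "opdiff (Op N \<sigma> c1) (Op N \<sigma> c2) \<xi> = Op N \<sigma> (\<lambda>g. c1 g - c2 g) \<xi>"
proof
  fix h
  show "opdiff (Op N \<sigma> c1) (Op N \<sigma> c2) \<xi> h = Op N \<sigma> (\<lambda>g. c1 g - c2 g) \<xi> h"
  proof -
    have s1: "(\<lambda>g. c1 g * Lam N \<sigma> g \<xi> h) summable_on ZN N" by (rule Op_summable[OF coc c1 xi])
    have s2: "(\<lambda>g. - (c2 g * Lam N \<sigma> g \<xi> h)) summable_on ZN N"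
      using Op_summable[OF coc c2 xi] by (simp add: summable_on_uminus)
    have "Op N \<sigma> (\<lambda>g. c1 g - c2 g) \<xi> h = infsum (\<lambda>g. c1 g * Lam N \<sigma> g \<xi> h + - (c2 g * Lam N \<sigma> g \<xi> h)) (ZN N)"
      unfolding Op_def by (simp add: algebra_simps)
    also have "\<dots> = Op N \<sigma> c1 \<xi> h + infsum (\<lambda>g. - (c2 g * Lam N \<sigma> g \<xi> h)) (ZN N)"
      unfolding Op_def by (rule infsum_add[OF s1 s2])
    also have "infsum (\<lambda>g. - (c2 g * Lam N \<sigma> g \<xi> h)) (ZN N) = - Op N \<sigma> c2 \<xi> h"
      unfolding Op_def by (rule infsum_uminus)
    finally show ?thesis by (simp add: opdiff_apply)
  qed
qed

end

theorem theorem5p7: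
  fixes N :: nat and L :: "grp \<Rightarrow> real" and \<sigma> :: "grp \<Rightarrow> grp \<Rightarrow> complex"
  assumes "L = L1 N \<or> L = L2 N \<or> L = L2sq N"
    and "normalized_cocycle N \<sigma>"
  shows "bounded_fourier_summing_net N \<sigma> (\<lambda>r g. complex_of_real (r powr L g)) {0<..<1} (at_left 1)
       \<and> (\<forall>x\<in>Cstar_r N \<sigma>. \<forall>r\<in>{0<..<1::real}.
            fourier_lim N \<sigma> (\<lambda>g. complex_of_real (r powr L g)) x (Mphi N \<sigma> (\<lambda>g. complex_of_real (r powr L g)) x))
       \<and> (\<forall>x\<in>Cstar_r N \<sigma>.
            ((\<lambda>r. opnorm N (opdiff (Mphi N \<sigma> (\<lambda>g. complex_of_real (r powr L g)) x) x)) \<longlongrightarrow> 0) (at_left 1))"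
proof -
  note L = assms(1) and coc = assms(2)
  define \<phi> where "\<phi> r = (\<lambda>g. complex_of_real (r powr L g))" for r :: real
  define Opr where "Opr r T = Op N \<sigma> (\<lambda>g. \<phi> r g * xhat T g)" for r T
  have csumT: "csum N (\<lambda>g. \<phi> r g * xhat T g) (infsum (\<lambda>g. cmod (\<phi> r g * xhat T g)) (ZN N))"
    if r: "0 < r" "r < 1" and T: "bounded_op N T" for r T
    unfolding \<phi>_def by (rule csum_infsum[OF coc coef_summable[OF L r T]])
  have bopr: "bounded_op N (Opr r T)" if r: "0 < r" "r < 1" and T: "bounded_op N T" for r T
    unfolding Opr_def by (rule bop_Op[OF coc csumT[OF r T]])
  have oprb: "opnorm N (Opr r T) \<le> opnorm N T"
    if r: "0 < r" "r < 1" and T: "bounded_op N T" and cv: "cov N \<sigma> T" for r T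
  proof -
    have e: "(\<lambda>g. \<phi> r g * xhat T g) = (\<lambda>g. complex_of_real (r powr L g) * T delta_e g)"
      by (simp add: \<phi>_def xhat_def)
    show ?thesis unfolding Opr_def e
      by (rule Op_bound[OF coc T cv SB_L[OF L r]]) (use csumT[OF r T] e in simp)
  qed
  have flim: "fourier_lim N \<sigma> (\<phi> r) x (Opr r x)" if r: "0 < r" "r < 1" and T: "bounded_op N x" for r x
    unfolding Opr_def by (rule Op_fourier_lim[OF coc]) (use coef_summable[OF L r T] in \<open>simp add: \<phi>_def\<close>)
  have mphi: "fourier_lim N \<sigma> (\<phi> r) x (Mphi N \<sigma> (\<phi> r) x)" "\<forall>\<xi>\<in>l2 N. Mphi N \<sigma> (\<phi> r) x \<xi> = Opr r x \<xi>"
    "opnorm N (Mphi N \<sigma> (\<phi> r) x) = opnorm N (Opr r x)" "bounded_op N (Mphi N \<sigma> (\<phi> r) x)"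
    if r: "0 < r" "r < 1" and x: "x \<in> Cstar_r N \<sigma>" for r x
  proof -
    have bx: "bounded_op N x" by (rule Cstar_cov[OF coc x])
    show m: "fourier_lim N \<sigma> (\<phi> r) x (Mphi N \<sigma> (\<phi> r) x)"
      unfolding Mphi_def by (rule someI[of _ "Opr r x"]) (rule flim[OF r bx])
    show eq: "\<forall>\<xi>\<in>l2 N. Mphi N \<sigma> (\<phi> r) x \<xi> = Opr r x \<xi>"
      using fl_unique[OF coc m flim[OF r bx]] by blast
    show "opnorm N (Mphi N \<sigma> (\<phi> r) x) = opnorm N (Opr r x)" by (rule opnorm_cong) (use eq in blast)
    show "bounded_op N (Mphi N \<sigma> (\<phi> r) x)" using m by (simp add: fourier_lim_def)
  qed
  have bound: "opnorm N (Mphi N \<sigma> (\<phi> r) x) \<le> 1 * opnorm N x"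
    if r: "0 < r" "r < 1" and x: "x \<in> Cstar_r N \<sigma>" for r x
    using mphi(3)[OF r x] oprb[OF r Cstar_cov[OF coc x]] by simp
  have conv: "((\<lambda>r. opnorm N (opdiff (Mphi N \<sigma> (\<phi> r) x) x)) \<longlongrightarrow> 0) (at_left 1)"
    if x: "x \<in> Cstar_r N \<sigma>" for x
  proof (rule tendstoI)
    fix e :: real assume e: "0 < e"
    have bx: "bounded_op N x" and cx: "cov N \<sigma> x" using Cstar_cov[OF coc x] by auto
    obtain F c where F: "finite F" "F \<subseteq> ZN N" and xa: "opnorm N (opdiff x (lincomb N \<sigma> c F)) < e / 3"
    proof -
      have "e / 3 > 0" using e by simp
      then show ?thesis using x that unfolding Cstar_r_def by blast
    qed
    define a where "a = lincomb N \<sigma> c F"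
    have ba: "bounded_op N a" unfolding a_def by (rule bop_lincomb[OF coc F])
    have ca: "cov N \<sigma> a" unfolding a_def by (rule cov_lincomb[OF coc F])
    define gr where "gr r = (\<Sum>g\<in>F. cmod (\<phi> r g - 1) * cmod (c g))" for r
    have "((\<lambda>r. gr r) \<longlongrightarrow> (\<Sum>g\<in>F. cmod (complex_of_real (1 powr L g) - 1) * cmod (c g))) (at_left 1)"
      unfolding gr_def \<phi>_def by (intro tendsto_intros) auto
    then have grl: "((\<lambda>r. gr r) \<longlongrightarrow> 0) (at_left 1)" by simp
    have ev1: "\<forall>\<^sub>F r in at_left 1. gr r < e / 3"
      using grl e by (intro order_tendstoD) auto
    have ev2: "\<forall>\<^sub>F r in at_left (1::real). r \<in> {0<..<1}"
      by (rule eventually_at_left_real) simp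
    show "\<forall>\<^sub>F r in at_left 1. dist (opnorm N (opdiff (Mphi N \<sigma> (\<phi> r) x) x)) 0 < e"
      using ev1 ev2
    proof eventually_elim
      case (elim r)
      then have r: "0 < r" "r < 1" by auto
      have bxr: "bounded_op N (Opr r x)" by (rule bopr[OF r bx])
      have bar: "bounded_op N (Opr r a)" by (rule bopr[OF r ba])
      have bM: "bounded_op N (Mphi N \<sigma> (\<phi> r) x)" by (rule mphi(4)[OF r x])
      have n1: "opnorm N (opdiff (Mphi N \<sigma> (\<phi> r) x) x) = opnorm N (opdiff (Opr r x) x)"
        by (rule opnorm_cong) (use mphi(2)[OF r x] in \<open>simp add: opdiff_apply\<close>)
      have n2: "opnorm N (opdiff (Opr r x) (Opr r a)) \<le> opnorm N (opdiff x a)"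
      proof -
        have "opnorm N (opdiff (Opr r x) (Opr r a)) = opnorm N (Opr r (opdiff x a))"
        proof (rule opnorm_cong)
          fix \<xi> assume xi: "\<xi> \<in> l2 N"
          have "opdiff (Opr r x) (Opr r a) \<xi> = Op N \<sigma> (\<lambda>g. \<phi> r g * xhat x g - \<phi> r g * xhat a g) \<xi>"
            unfolding Opr_def by (rule Op_diff[OF coc csumT[OF r bx] csumT[OF r ba] xi])
          also have "(\<lambda>g. \<phi> r g * xhat x g - \<phi> r g * xhat a g) = (\<lambda>g. \<phi> r g * xhat (opdiff x a) g)"
            by (simp add: xhat_def opdiff_apply algebra_simps)
          finally show "opdiff (Opr r x) (Opr r a) \<xi> = Opr r (opdiff x a) \<xi>" by (simp add: Opr_def)
        qed
        also have "\<dots> \<le> opnorm N (opdiff x a)"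
          by (rule oprb[OF r bop_opdiff[OF bx ba] cov_opdiff[OF coc cx ca]])
        finally show ?thesis .
      qed
      have n3: "opnorm N (opdiff (Opr r a) a) \<le> gr r"
      proof -
        have "opnorm N (opdiff (Opr r a) a) = opnorm N (lincomb N \<sigma> (\<lambda>g. (\<phi> r g - 1) * c g) F)"
        proof (rule opnorm_cong)
          fix \<xi> assume xi: "\<xi> \<in> l2 N"
          have "Opr r a \<xi> = lincomb N \<sigma> (\<lambda>g. \<phi> r g * c g) F \<xi>"
            unfolding Opr_def a_def by (rule Op_of_lincomb[OF coc F])
          show "opdiff (Opr r a) a \<xi> = lincomb N \<sigma> (\<lambda>g. (\<phi> r g - 1) * c g) F \<xi>"
          proof
            fix h
            have "lincomb N \<sigma> (\<lambda>g. \<phi> r g * c g) F \<xi> h - lincomb N \<sigma> c F \<xi> h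
                = lincomb N \<sigma> (\<lambda>g. (\<phi> r g - 1) * c g) F \<xi> h"
              unfolding lincomb_def sum_subtractf[symmetric] by (rule sum.cong) (simp_all add: algebra_simps)
            then show "opdiff (Opr r a) a \<xi> h = lincomb N \<sigma> (\<lambda>g. (\<phi> r g - 1) * c g) F \<xi> h"
              using \<open>Opr r a \<xi> = lincomb N \<sigma> (\<lambda>g. \<phi> r g * c g) F \<xi>\<close>
              by (simp add: opdiff_apply a_def)
          qed
        qed
        also have "\<dots> \<le> gr r"
        proof (rule opnorm_le)
          show "0 \<le> gr r" by (simp add: gr_def sum_nonneg)
          fix \<xi> assume xi: "\<xi> \<in> l2 N"
          show "l2norm N (lincomb N \<sigma> (\<lambda>g. (\<phi> r g - 1) * c g) F \<xi>) \<le> gr r * l2norm N \<xi>"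
            using lincomb_l2[OF coc F xi, of "\<lambda>g. (\<phi> r g - 1) * c g"] by (simp add: gr_def norm_mult)
        qed
        finally show ?thesis .
      qed
      have "opnorm N (opdiff (Opr r x) x) \<le> opnorm N (opdiff (Opr r x) (Opr r a)) + opnorm N (opdiff (Opr r a) x)"
        by (rule opnorm_opdiff_tri[OF bxr bar bx])
      also have "opnorm N (opdiff (Opr r a) x) \<le> opnorm N (opdiff (Opr r a) a) + opnorm N (opdiff a x)"
        by (rule opnorm_opdiff_tri[OF bar ba bx])
      also have "opnorm N (opdiff a x) = opnorm N (opdiff x a)" by (rule opnorm_opdiff_sym)
      finally have "opnorm N (opdiff (Opr r x) x) < e / 3 + e / 3 + e / 3"
        using n2 n3 xa elim unfolding a_def by linarith
      moreover have "0 \<le> opnorm N (opdiff (Mphi N \<sigma> (\<phi> r) x) x)"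
        by (rule opnorm_nonneg[OF bop_opdiff[OF bM bx]])
      ultimately show ?case using n1 by (simp add: dist_real_def)
    qed
  qed
  have P1: "bounded_fourier_summing_net N \<sigma> \<phi> {0<..<1} (at_left 1)"
    unfolding bounded_fourier_summing_net_def
  proof (intro conjI)
    show "\<forall>a\<in>{0<..<1}. \<phi> a \<in> MCF N \<sigma>"
    proof
      fix a :: real assume "a \<in> {0<..<1}"
      then have a: "0 < a" "a < 1" by auto
      show "\<phi> a \<in> MCF N \<sigma>" unfolding MCF_def using mphi(1)[OF a] by blast
    qed
    show "\<forall>x\<in>Cstar_r N \<sigma>. ((\<lambda>a. opnorm N (opdiff (Mphi N \<sigma> (\<phi> a) x) x)) \<longlongrightarrow> 0) (at_left 1)"
      using conv by blast
    show "\<exists>C. \<forall>a\<in>{0<..<1}. \<forall>x\<in>Cstar_r N \<sigma>. opnorm N (Mphi N \<sigma> (\<phi> a) x) \<le> C * opnorm N x"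
    proof (rule exI[of _ 1], intro ballI)
      fix a x assume "a \<in> {0<..<1::real}" "x \<in> Cstar_r N \<sigma>"
      then show "opnorm N (Mphi N \<sigma> (\<phi> a) x) \<le> 1 * opnorm N x" using bound by auto
    qed
  qed
  show ?thesis
    using P1 mphi(1) conv unfolding \<phi>_def by auto
qed

end
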